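(* Let $(A,\Delta)$ be an algebraic quantum hypergroup with counit $\varepsilon$ and antipode $S$. Then for all $x\in A$: - $\varepsilon(S(x))=\varepsilon(x)$; - $\Delta(S(x))=\zeta(S\otimes S)\Delta(x)$ in $M(A\otimes A)$. Here $\zeta$ is the flip $a\otimes b\mapsto b\otimes a$, extended to $M(A\otimes A)$, and $S\otimes S$ is extended to an anti-automorphism of $M(A\otimes A)$.
   Context: **Standing definitions.** All algebras are over $\mathbb C$, associative, possibly without identity, with non-degenerate product. $M(A)$ denotes the multiplier algebra and $\iota$ the identity map. *Comultiplication.* A regular comultiplication is a linear map $\Delta:A\to M(A\otimes A)$, not assumed multiplicative, such that: - $\Delta(a)(1\otimes b)$, $(a\otimes1)\Delta(b)$, $\Delta(a)(b\otimes1)$ and $(1\otimes a)\Delta(b)$ lie in $A\otimes A$; - $(a\otimes1\otimes1)(\Delta\otimes\iota)(\Delta(b)(1\otimes c))=(\iota\otimes\Delta)((a\otimes1)\Delta(b))(1\otimes1\otimes c)$. *Counit.* A counit is a homomorphism $\varepsilon$ with $(\varepsilon\otimes\iota)\Delta=\iota=(\iota\otimes\varepsilon)\Delta$. *Integrals.* A left integral is a nonzero $\varphi$ with $(\iota\otimes\varphi)\Delta(a)=\varphi(a)1$ in $M(A)$. A functional is faithful if $f(ab)=0\ \forall b$ or $f(ba)=0\ \forall b$ forces $a=0$. *Antipode.* An antipode relative to a faithful left integral $\varphi$ is a bijective linear anti-homomorphism $S$ with $S((\iota\otimes\varphi)(\Delta(a)(1\otimes b)))=(\iota\otimes\varphi)((1\otimes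 a)\Delta(b))$. *Algebraic quantum hypergroup.* A pair $(A,\Delta)$ with a regular comultiplication admitting a counit $\varepsilon$, a faithful left integral $\varphi$ and an antipode $S$ relative to $\varphi$. *)

theory Defs
  imports Complex_Main
begin

class calg = ring +
  fixes cscale :: "complex \<Rightarrow> 'a \<Rightarrow> 'a"
  assumes cs_add_right: "cscale c (x + y) = cscale c x + cscale c y"
    and cs_add_left: "cscale (c + d) x = cscale c x + cscale d x"
    and cs_assoc: "cscale c (cscale d x) = cscale (c * d) x"
    and cs_one: "cscale 1 x = x"
    and cs_mult_left: "cscale c x * y = cscale c (x * y)"
    and cs_mult_right: "x * cscale c y = cscale c (x * y)"

definition nondegenerate :: "'a::calg itself \<Rightarrow> bool" where
  "nondegenerate _ \<longleftrightarrow>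
     (\<forall>a::'a. (\<forall>b. a * b = 0) \<longrightarrow> a = 0) \<and> (\<forall>a::'a. (\<forall>b. b * a = 0) \<longrightarrow> a = 0)"

definition clin :: "('a::calg \<Rightarrow> 'b::calg) \<Rightarrow> bool" where
  "clin f \<longleftrightarrow> (\<forall>x y. f (x + y) = f x + f y) \<and> (\<forall>c x. f (cscale c x) = cscale c (f x))"

definition cfun :: "('a::calg \<Rightarrow> complex) \<Rightarrow> bool" where
  "cfun f \<longleftrightarrow> (\<forall>x y. f (x + y) = f x + f y) \<and> (\<forall>c x. f (cscale c x) = c * f x)"

text \<open>An element of the algebraic tensor product A\<otimes>A is represented faithfully by the
  functional it induces on the space of bilinear forms on A (that is, on the dual of A\<otimes>A);
  the value on non-bilinear arguments is normalised to 0. Similarly for A\<otimes>A\<otimes>A with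
  trilinear forms.\<close>

definition bil :: "('a::calg \<Rightarrow> 'a \<Rightarrow> complex) \<Rightarrow> bool" where
  "bil \<beta> \<longleftrightarrow> (\<forall>a. cfun (\<beta> a)) \<and> (\<forall>b. cfun (\<lambda>a. \<beta> a b))"

definition tril :: "('a::calg \<Rightarrow> 'a \<Rightarrow> 'a \<Rightarrow> complex) \<Rightarrow> bool" where
  "tril \<gamma> \<longleftrightarrow> (\<forall>a b. cfun (\<gamma> a b)) \<and> (\<forall>a c. cfun (\<lambda>b. \<gamma> a b c)) \<and> (\<forall>b c. cfun (\<lambda>a. \<gamma> a b c))"

type_synonym 'a t2 = "('a \<Rightarrow> 'a \<Rightarrow> complex) \<Rightarrow> complex"
type_synonym 'a t3 = "('a \<Rightarrow> 'a \<Rightarrow> 'a \<Rightarrow> complex) \<Rightarrow> complex"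
type_synonym 'a m2 = "('a t2 \<Rightarrow> 'a t2) \<times> ('a t2 \<Rightarrow> 'a t2)"
type_synonym 'a m3 = "('a t3 \<Rightarrow> 'a t3) \<times> ('a t3 \<Rightarrow> 'a t3)"

definition g2 :: "('a::calg \<Rightarrow> 'a \<Rightarrow> complex) \<Rightarrow> complex \<Rightarrow> complex" where
  "g2 \<beta> v = (if bil \<beta> then v else 0)"

definition g3 :: "('a::calg \<Rightarrow> 'a \<Rightarrow> 'a \<Rightarrow> complex) \<Rightarrow> complex \<Rightarrow> complex" where
  "g3 \<gamma> v = (if tril \<gamma> then v else 0)"

definition tp :: "'a::calg \<Rightarrow> 'a \<Rightarrow> 'a t2" where
  "tp a b = (\<lambda>\<beta>. g2 \<beta> (\<beta> a b))"

definition tp3 :: "'a::calg \<Rightarrow> 'a \<Rightarrow> 'a \<Rightarrow> 'a t3" where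
  "tp3 a b c = (\<lambda>\<gamma>. g3 \<gamma> (\<gamma> a b c))"

definition T2 :: "'a::calg t2 set" where
  "T2 = {T. \<exists>n a b. T = (\<lambda>\<beta>. \<Sum>i<(n::nat). tp (a i) (b i) \<beta>)}"

definition T3 :: "'a::calg t3 set" where
  "T3 = {T. \<exists>n a b c. T = (\<lambda>\<gamma>. \<Sum>i<(n::nat). tp3 (a i) (b i) (c i) \<gamma>)}"

definition addt :: "'a::calg t2 \<Rightarrow> 'a t2 \<Rightarrow> 'a t2" where
  "addt T U = (\<lambda>\<beta>. T \<beta> + U \<beta>)"

definition scalet :: "complex \<Rightarrow> 'a::calg t2 \<Rightarrow> 'a t2" where
  "scalet c T = (\<lambda>\<beta>. c * T \<beta>)"

text \<open>Product of A\<otimes>A: (a\<otimes>b)(c\<otimes>d) = ac\<otimes>bd.\<close>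
definition mult2 :: "'a::calg t2 \<Rightarrow> 'a t2 \<Rightarrow> 'a t2" where
  "mult2 T U = (\<lambda>\<beta>. g2 \<beta> (T (\<lambda>a b. U (\<lambda>c d. \<beta> (a * c) (b * d)))))"

text \<open>A multiplier of an algebra with carrier S and product mul is a pair (L,R) of maps
  S \<rightarrow> S (L y = m y, R x = x m) such that x (L y) = (R x) y.\<close>

definition is_mult :: "'t set \<Rightarrow> ('t \<Rightarrow> 't \<Rightarrow> 't) \<Rightarrow> ('t \<Rightarrow> 't) \<times> ('t \<Rightarrow> 't) \<Rightarrow> bool" where
  "is_mult S mul m \<longleftrightarrow> (\<forall>y\<in>S. fst m y \<in> S) \<and> (\<forall>x\<in>S. snd m x \<in> S) \<and>
     (\<forall>x\<in>S. \<forall>y\<in>S. mul x (fst m y) = mul (snd m x) y)"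

definition mult_eq :: "'t set \<Rightarrow> ('t \<Rightarrow> 't) \<times> ('t \<Rightarrow> 't) \<Rightarrow> ('t \<Rightarrow> 't) \<times> ('t \<Rightarrow> 't) \<Rightarrow> bool" where
  "mult_eq S m n \<longleftrightarrow> (\<forall>y\<in>S. fst m y = fst n y) \<and> (\<forall>x\<in>S. snd m x = snd n x)"

definition mmul :: "('t \<Rightarrow> 't) \<times> ('t \<Rightarrow> 't) \<Rightarrow> ('t \<Rightarrow> 't) \<times> ('t \<Rightarrow> 't) \<Rightarrow> ('t \<Rightarrow> 't) \<times> ('t \<Rightarrow> 't)" where
  "mmul m n = (\<lambda>y. fst m (fst n y), \<lambda>x. snd n (snd m x))"

definition emb :: "('t \<Rightarrow> 't \<Rightarrow> 't) \<Rightarrow> 't \<Rightarrow> ('t \<Rightarrow> 't) \<times> ('t \<Rightarrow> 't)" where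
  "emb mul t = (\<lambda>y. mul t y, \<lambda>x. mul x t)"

definition as2 :: "'a::calg m2 \<Rightarrow> 'a t2" where
  "as2 m = (SOME t. t \<in> T2 \<and> mult_eq T2 (emb mult2 t) m)"

definition in2 :: "'a::calg m2 \<Rightarrow> bool" where
  "in2 m \<longleftrightarrow> (\<exists>t\<in>T2. mult_eq T2 (emb mult2 t) m)"

text \<open>The multipliers 1\<otimes>b, b\<otimes>1 of A\<otimes>A and a\<otimes>1\<otimes>1, 1\<otimes>1\<otimes>c of A\<otimes>A\<otimes>A.\<close>
definition one_t :: "'a::calg \<Rightarrow> 'a m2" where
  "one_t b = (\<lambda>y \<beta>. g2 \<beta> (y (\<lambda>x z. \<beta> x (b * z))), \<lambda>y \<beta>. g2 \<beta> (y (\<lambda>x z. \<beta> x (z * b))))"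

definition t_one :: "'a::calg \<Rightarrow> 'a m2" where
  "t_one b = (\<lambda>y \<beta>. g2 \<beta> (y (\<lambda>x z. \<beta> (b * x) z)), \<lambda>y \<beta>. g2 \<beta> (y (\<lambda>x z. \<beta> (x * b) z)))"

definition t_one_one :: "'a::calg \<Rightarrow> 'a m3" where
  "t_one_one a = (\<lambda>W \<gamma>. g3 \<gamma> (W (\<lambda>x y z. \<gamma> (a * x) y z)),
                  \<lambda>W \<gamma>. g3 \<gamma> (W (\<lambda>x y z. \<gamma> (x * a) y z)))"

definition one_one_t :: "'a::calg \<Rightarrow> 'a m3" where
  "one_one_t c = (\<lambda>W \<gamma>. g3 \<gamma> (W (\<lambda>x y z. \<gamma> x y (c * z))),
                  \<lambda>W \<gamma>. g3 \<gamma> (W (\<lambda>x y z. \<gamma> x y (z * c))))"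

section \<open>Maps \<Delta>\<otimes>\<iota>, \<iota>\<otimes>\<Delta> : A\<otimes>A \<rightarrow> M(A\<otimes>A\<otimes>A)\<close>

text \<open>(\<Delta>\<otimes>\<iota>)(a\<otimes>b) = \<Delta>(a)\<otimes>b acting by (\<Delta>(a)\<otimes>b)(x\<otimes>y\<otimes>z) = \<Delta>(a)(x\<otimes>y)\<otimes>bz and
  (x\<otimes>y\<otimes>z)(\<Delta>(a)\<otimes>b) = (x\<otimes>y)\<Delta>(a)\<otimes>zb, extended linearly.\<close>
definition DeltaI :: "('a::calg \<Rightarrow> 'a m2) \<Rightarrow> 'a t2 \<Rightarrow> 'a m3" where
  "DeltaI \<Delta> T =
    (\<lambda>W \<gamma>. g3 \<gamma> (T (\<lambda>a b. W (\<lambda>x y z. fst (\<Delta> a) (tp x y) (\<lambda>x' y'. \<gamma> x' y' (b * z))))),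
     \<lambda>W \<gamma>. g3 \<gamma> (T (\<lambda>a b. W (\<lambda>x y z. snd (\<Delta> a) (tp x y) (\<lambda>x' y'. \<gamma> x' y' (z * b))))))"

definition IDelta :: "('a::calg \<Rightarrow> 'a m2) \<Rightarrow> 'a t2 \<Rightarrow> 'a m3" where
  "IDelta \<Delta> T =
    (\<lambda>W \<gamma>. g3 \<gamma> (T (\<lambda>a b. W (\<lambda>x y z. fst (\<Delta> b) (tp y z) (\<lambda>y' z'. \<gamma> (a * x) y' z')))),
     \<lambda>W \<gamma>. g3 \<gamma> (T (\<lambda>a b. W (\<lambda>x y z. snd (\<Delta> b) (tp y z) (\<lambda>y' z'. \<gamma> (x * a) y' z')))))"

section \<open>Slice maps \<omega>\<otimes>\<iota> and \<iota>\<otimes>\<omega> : A\<otimes>A \<rightarrow> A\<close>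

definition slice_l :: "('a::calg \<Rightarrow> complex) \<Rightarrow> 'a t2 \<Rightarrow> 'a" where
  "slice_l \<omega> T = (SOME x. \<forall>g. cfun g \<longrightarrow> T (\<lambda>u v. \<omega> u * g v) = g x)"

definition slice_r :: "('a::calg \<Rightarrow> complex) \<Rightarrow> 'a t2 \<Rightarrow> 'a" where
  "slice_r \<omega> T = (SOME x. \<forall>g. cfun g \<longrightarrow> T (\<lambda>u v. g u * \<omega> v) = g x)"

definition regular_comult :: "('a::calg \<Rightarrow> 'a m2) \<Rightarrow> bool" where
  "regular_comult \<Delta> \<longleftrightarrow>
     (\<forall>a. is_mult T2 mult2 (\<Delta> a)) \<and>
     (\<forall>a a'. \<forall>y\<in>T2. fst (\<Delta> (a + a')) y = addt (fst (\<Delta> a) y) (fst (\<Delta> a') y) \<and>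
                     snd (\<Delta> (a + a')) y = addt (snd (\<Delta> a) y) (snd (\<Delta> a') y)) \<and>
     (\<forall>c a. \<forall>y\<in>T2. fst (\<Delta> (cscale c a)) y = scalet c (fst (\<Delta> a) y) \<and>
                    snd (\<Delta> (cscale c a)) y = scalet c (snd (\<Delta> a) y)) \<and>
     (\<forall>a b. in2 (mmul (\<Delta> a) (one_t b)) \<and> in2 (mmul (t_one a) (\<Delta> b)) \<and>
            in2 (mmul (\<Delta> a) (t_one b)) \<and> in2 (mmul (one_t a) (\<Delta> b))) \<and>
     (\<forall>a b c. mult_eq T3
        (mmul (t_one_one a) (DeltaI \<Delta> (as2 (mmul (\<Delta> b) (one_t c)))))
        (mmul (IDelta \<Delta> (as2 (mmul (t_one a) (\<Delta> b)))) (one_one_t c)))"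

definition counit :: "('a::calg \<Rightarrow> 'a m2) \<Rightarrow> ('a \<Rightarrow> complex) \<Rightarrow> bool" where
  "counit \<Delta> \<epsilon> \<longleftrightarrow> cfun \<epsilon> \<and> (\<forall>a b. \<epsilon> (a * b) = \<epsilon> a * \<epsilon> b) \<and>
     (\<forall>a b. slice_l \<epsilon> (as2 (mmul (\<Delta> a) (one_t b))) = a * b \<and>
            slice_l \<epsilon> (as2 (mmul (one_t b) (\<Delta> a))) = b * a \<and>
            slice_r \<epsilon> (as2 (mmul (\<Delta> a) (t_one b))) = a * b \<and>
            slice_r \<epsilon> (as2 (mmul (t_one b) (\<Delta> a))) = b * a)"

definition left_integral :: "('a::calg \<Rightarrow> 'a m2) \<Rightarrow> ('a \<Rightarrow> complex) \<Rightarrow> bool" where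
  "left_integral \<Delta> \<phi> \<longleftrightarrow> cfun \<phi> \<and> (\<exists>a. \<phi> a \<noteq> 0) \<and>
     (\<forall>a b. slice_r \<phi> (as2 (mmul (\<Delta> a) (t_one b))) = cscale (\<phi> a) b \<and>
            slice_r \<phi> (as2 (mmul (t_one b) (\<Delta> a))) = cscale (\<phi> a) b)"

definition faithful :: "('a::calg \<Rightarrow> complex) \<Rightarrow> bool" where
  "faithful f \<longleftrightarrow> (\<forall>a. ((\<forall>b. f (a * b) = 0) \<or> (\<forall>b. f (b * a) = 0)) \<longrightarrow> a = 0)"

definition antipode :: "('a::calg \<Rightarrow> 'a m2) \<Rightarrow> ('a \<Rightarrow> complex) \<Rightarrow> ('a \<Rightarrow> 'a) \<Rightarrow> bool" where
  "antipode \<Delta> \<phi> S \<longleftrightarrow> bij S \<and> clin S \<and> (\<forall>a b. S (a * b) = S b * S a) \<and>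
     (\<forall>a b. S (slice_r \<phi> (as2 (mmul (\<Delta> a) (one_t b)))) =
            slice_r \<phi> (as2 (mmul (one_t a) (\<Delta> b))))"

definition alg_quantum_hypergroup ::
    "('a::calg \<Rightarrow> 'a m2) \<Rightarrow> ('a \<Rightarrow> complex) \<Rightarrow> ('a \<Rightarrow> 'a) \<Rightarrow> bool" where
  "alg_quantum_hypergroup \<Delta> \<epsilon> S \<longleftrightarrow> nondegenerate TYPE('a) \<and> regular_comult \<Delta> \<and> counit \<Delta> \<epsilon> \<and>
     (\<exists>\<phi>. left_integral \<Delta> \<phi> \<and> faithful \<phi> \<and> antipode \<Delta> \<phi> S)"

section \<open>The anti-automorphism \<zeta>\<circ>(S\<otimes>S) of A\<otimes>A and its extension to M(A\<otimes>A)\<close>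

definition flipSS :: "('a::calg \<Rightarrow> 'a) \<Rightarrow> 'a t2 \<Rightarrow> 'a t2" where
  "flipSS S T = (\<lambda>\<beta>. g2 \<beta> (T (\<lambda>a b. \<beta> (S b) (S a))))"

text \<open>Extension to multipliers: \<Theta>(m)\<Theta>(y) = \<Theta>(y m) and \<Theta>(y)\<Theta>(m) = \<Theta>(m y),
  where \<Theta> = flipSS S is bijective on A\<otimes>A with inverse flipSS (inv S).\<close>
definition flipSS_M :: "('a::calg \<Rightarrow> 'a) \<Rightarrow> 'a m2 \<Rightarrow> 'a m2" where
  "flipSS_M S m = (\<lambda>u. flipSS S (snd m (flipSS (inv S) u)),
                   \<lambda>u. flipSS S (fst m (flipSS (inv S) u)))"

end

theory Submission
  imports Defs
begin

interpretation CV: vector_space "cscale :: complex \<Rightarrow> 'a::calg \<Rightarrow> 'a"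
  by unfold_locales (auto simp: cs_add_right cs_add_left cs_assoc cs_one)

lemma vs_complex: "vector_space ((*) :: complex \<Rightarrow> complex \<Rightarrow> complex)"
  by unfold_locales (auto simp: algebra_simps)

interpretation CVP: vector_space_pair "cscale :: complex \<Rightarrow> 'a::calg \<Rightarrow> 'a" "(*) :: complex \<Rightarrow> complex \<Rightarrow> complex"
  by (simp add: vector_space_pair_def CV.vector_space_axioms vs_complex)

lemma cfun_add: "cfun f \<Longrightarrow> f (x + y) = f x + f y"
  and cfun_scale: "cfun f \<Longrightarrow> f (cscale c x) = c * f x"
  by (auto simp: cfun_def)

lemma cfun_zero: "cfun f \<Longrightarrow> f 0 = 0"
  using cfun_add[of f 0 0] by simp

lemma cfun_neg: "cfun f \<Longrightarrow> f (- x) = - f x"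
  using cfun_add[of f x "-x"] cfun_zero[of f] by (simp add: eq_neg_iff_add_eq_0 add.commute)

lemma cfun_diff: "cfun f \<Longrightarrow> f (x - y) = f x - f y"
  using cfun_add[of f x "-y"] cfun_neg[of f y] by simp

lemma cfun_sum: "cfun f \<Longrightarrow> f (sum g I) = (\<Sum>i\<in>I. f (g i))"
  by (induction I rule: infinite_finite_induct) (auto simp: cfun_zero cfun_add)

lemma cfun_linear: "cfun f \<longleftrightarrow> Vector_Spaces.linear cscale ((*) :: complex \<Rightarrow> complex \<Rightarrow> complex) f"
  by (simp add: Vector_Spaces.linear_iff cfun_def CV.vector_space_axioms vs_complex)

lemma span_vanish:
  assumes "cfun g" "\<forall>y\<in>B. g y = 0" "x \<in> CV.span B"
  shows "g x = 0"
  using assms(3)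
proof (induction rule: CV.span_induct_alt)
  case base then show ?case using cfun_zero[OF assms(1)] by simp
next
  case (step c x y) then show ?case using assms(1,2) by (simp add: cfun_add cfun_scale)
qed

lemma sep_span:
  fixes x :: "'a::calg"
  assumes "x \<notin> CV.span G"
  shows "\<exists>\<omega>. cfun \<omega> \<and> (\<forall>y\<in>CV.span G. \<omega> y = 0) \<and> \<omega> x = 1"
proof -
  obtain B where B: "B \<subseteq> G" "CV.independent B" "G \<subseteq> CV.span B"
    by (rule CV.maximal_independent_subset)
  have sp: "CV.span G \<subseteq> CV.span B"
    using B(3) CV.span_mono CV.span_span by blast
  then have "x \<notin> CV.span B" using assms B(1) CV.span_mono by blast
  then have ind: "CV.independent (insert x B)" using B(2) CV.independent_insertI by blast
  obtain g where g: "Vector_Spaces.linear cscale ((*) :: complex \<Rightarrow> complex \<Rightarrow> complex) g"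
      "\<forall>z\<in>insert x B. g z = (\<lambda>z. if z = x then 1 else 0) z"
    using CVP.linear_independent_extend[OF ind, of "\<lambda>z. if z = x then 1 else 0"] by blast
  have cg: "cfun g" using g(1) cfun_linear by blast
  have "x \<notin> B" using \<open>x \<notin> CV.span B\<close> CV.span_base by blast
  then have "\<forall>y\<in>B. g y = 0" using g(2) by auto
  then have "\<forall>y\<in>CV.span G. g y = 0" using span_vanish[OF cg] sp by blast
  moreover have "g x = 1" using g(2) by simp
  ultimately show ?thesis using cg by blast
qed

lemma sep0:
  fixes x :: "'a::calg"
  assumes "\<And>g. cfun g \<Longrightarrow> g x = 0" shows "x = 0"
proof (rule ccontr)
  assume "x \<noteq> 0"
  then have "x \<notin> CV.span {}" by simp
  then obtain \<omega> where "cfun \<omega>" "\<omega> x = 1" using sep_span by blast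
  then show False using assms by force
qed

lemma sep_eq:
  fixes x y :: "'a::calg"
  assumes "\<And>g. cfun g \<Longrightarrow> g x = g y" shows "x = y"
  using sep0[of "x - y"] assms by (simp add: cfun_diff)


definition ev :: "'a::calg t2 \<Rightarrow> ('a \<Rightarrow> complex) \<Rightarrow> ('a \<Rightarrow> complex) \<Rightarrow> complex" where
  "ev Z f g = Z (\<lambda>u v. f u * g v)"

definition rs :: "('a::calg \<Rightarrow> complex) \<Rightarrow> 'a \<Rightarrow> 'a \<Rightarrow> complex" where
  "rs f u = (\<lambda>x. f (x * u))"

definition ls :: "'a::calg \<Rightarrow> ('a \<Rightarrow> complex) \<Rightarrow> 'a \<Rightarrow> complex" where
  "ls u f = (\<lambda>x. f (u * x))"

lemma rs_apply[simp]: "rs f u x = f (x * u)" by (simp add: rs_def)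
lemma ls_apply[simp]: "ls u f x = f (u * x)" by (simp add: ls_def)

lemma cfun_rs[simp]: "cfun f \<Longrightarrow> cfun (rs f u)"
  unfolding cfun_def by (auto simp: distrib_right cs_mult_left)

lemma cfun_ls[simp]: "cfun f \<Longrightarrow> cfun (ls u f)"
  unfolding cfun_def by (auto simp: distrib_left cs_mult_right)

lemma rs_rs: "rs (rs f u) v = rs f (v * u)"
  by (simp add: rs_def mult.assoc)

lemma ls_ls: "ls u (ls v f) = ls (v * u) f"
  by (simp add: ls_def mult.assoc)

lemma ls_rs: "ls u (rs f v) = rs (ls u f) v"
  by (simp add: ls_def rs_def mult.assoc)

lemma cfun_mult_const: "cfun f \<Longrightarrow> cfun (\<lambda>x. c * f x)"
  unfolding cfun_def by (simp add: cfun_add cfun_scale distrib_left)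

lemma bil_prod: assumes "cfun f" "cfun g" shows "bil (\<lambda>u v. f u * g v)"
  unfolding bil_def cfun_def
  apply (intro conjI allI)
  apply (simp_all add: cfun_add[OF assms(1)] cfun_add[OF assms(2)] cfun_scale[OF assms(1)] cfun_scale[OF assms(2)] distrib_left distrib_right)
  done

definition tsum :: "'i set \<Rightarrow> ('i \<Rightarrow> 'a::calg) \<Rightarrow> ('i \<Rightarrow> 'a) \<Rightarrow> 'a t2" where
  "tsum I a b = (\<lambda>\<beta>. if bil \<beta> then (\<Sum>i\<in>I. \<beta> (a i) (b i)) else 0)"

lemma tp_tsum: "tp u v = tsum {()} (\<lambda>_. u) (\<lambda>_. v)"
  by (auto simp: tp_def tsum_def g2_def)

lemma sum_if_const: "(\<Sum>i\<in>I. if P then f i else 0) = (if P then sum f I else 0)"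
  by (cases P) simp_all

lemma T2_tsum: "Z \<in> T2 \<Longrightarrow> \<exists>n a b. Z = tsum {..<(n::nat)} a b"
proof -
  assume "Z \<in> T2"
  then obtain n a b where "Z = (\<lambda>\<beta>. \<Sum>i<(n::nat). tp (a i) (b i) \<beta>)"
    unfolding T2_def mem_Collect_eq by (elim exE)
  then have "Z = tsum {..<n} a b" unfolding tsum_def tp_def g2_def by (simp only: sum_if_const)
  then show ?thesis by (intro exI[of _ n] exI[of _ a] exI[of _ b])
qed

lemma tsum_T2: assumes "finite I" shows "tsum I a b \<in> T2"
proof -
  obtain h where h: "bij_betw h {0..<card I} I" using ex_bij_betw_nat_finite[OF assms] by blast
  have eq: "(\<Sum>i\<in>I. \<beta> (a i) (b i)) = (\<Sum>x<card I. \<beta> (a (h x)) (b (h x)))" for \<beta>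
    unfolding atLeast0LessThan[symmetric] using sum.reindex_bij_betw[OF h, of "\<lambda>i. \<beta> (a i) (b i)"]
    by (rule sym)
  have "tsum I a b = (\<lambda>\<beta>. \<Sum>i<card I. tp (a (h i)) (b (h i)) \<beta>)"
    unfolding tsum_def tp_def g2_def sum_if_const by (simp only: eq)
  then show ?thesis unfolding T2_def
    by (intro CollectI exI[of _ "card I"] exI[of _ "\<lambda>i. a (h i)"] exI[of _ "\<lambda>i. b (h i)"])
qed

lemma tp_T2[simp]: "tp u v \<in> T2"
  by (simp add: tp_tsum tsum_T2)

lemma ev_tsum: "cfun f \<Longrightarrow> cfun g \<Longrightarrow> ev (tsum I a b) f g = (\<Sum>i\<in>I. f (a i) * g (b i))"
  unfolding ev_def tsum_def by (drule (1) bil_prod) (simp only: if_True)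

lemma ev_tp[simp]: "cfun f \<Longrightarrow> cfun g \<Longrightarrow> ev (tp u v) f g = f u * g v"
  by (simp add: tp_tsum ev_tsum)

section \<open>Represented bilinear forms on functionals\<close>

definition rep2 :: "(('a::calg \<Rightarrow> complex) \<Rightarrow> ('a \<Rightarrow> complex) \<Rightarrow> complex) \<Rightarrow> bool" where
  "rep2 B \<longleftrightarrow> (\<exists>n a b. \<forall>F G. cfun F \<longrightarrow> cfun G \<longrightarrow> B F G = (\<Sum>i<(n::nat). F (a i) * G (b i)))"

lemma rep2_I:
  fixes I :: "'i set" and B :: "('a::calg \<Rightarrow> complex) \<Rightarrow> ('a \<Rightarrow> complex) \<Rightarrow> complex"
    and a b :: "'i \<Rightarrow> 'a"
  assumes "finite I" "\<And>F G. cfun F \<Longrightarrow> cfun G \<Longrightarrow> B F G = (\<Sum>i\<in>I. F (a i) * G (b i))"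
  shows "rep2 B"
proof -
  obtain h where h: "bij_betw h {0..<card I} I" using ex_bij_betw_nat_finite[OF assms(1)] by blast
  have "\<forall>F G. cfun F \<longrightarrow> cfun G \<longrightarrow> B F G = (\<Sum>i<card I. F (a (h i)) * G (b (h i)))"
  proof (intro allI impI)
    fix F G :: "'a \<Rightarrow> complex" assume "cfun F" "cfun G"
    then show "B F G = (\<Sum>i<card I. F (a (h i)) * G (b (h i)))"
      using assms(2) sum.reindex_bij_betw[OF h, of "\<lambda>i. F (a i) * G (b i)"]
      by (simp add: atLeast0LessThan)
  qed
  then show ?thesis unfolding rep2_def by (intro exI[of _ "card I"] exI[of _ "\<lambda>i. a (h i)"] exI[of _ "\<lambda>i. b (h i)"])
qed

lemma rep2_E:
  fixes B :: "('a::calg \<Rightarrow> complex) \<Rightarrow> ('a \<Rightarrow> complex) \<Rightarrow> complex"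
  assumes "rep2 B"
  obtains n a b where "\<And>F G. cfun F \<Longrightarrow> cfun G \<Longrightarrow> B F G = (\<Sum>i<(n::nat). F (a i) * G (b i))"
  using assms unfolding rep2_def by blast

lemma rep2_ev: "Z \<in> T2 \<Longrightarrow> rep2 (ev Z)"
proof -
  assume "Z \<in> T2"
  then obtain n a b where Z: "Z = tsum {..<(n::nat)} a b" using T2_tsum by blast
  show ?thesis by (rule rep2_I[of "{..<n}" _ a b]) (simp_all add: Z ev_tsum)
qed

lemma rep2_prod: "rep2 (\<lambda>F G. F x * G y)"
  by (rule rep2_I[of "{()}" _ "\<lambda>_. x" "\<lambda>_. y"]) auto

lemma rep2_zero: "rep2 (\<lambda>F G. 0)"
  by (rule rep2_I[of "{}"]) auto

lemma rep2_add:
  assumes "rep2 B1" "rep2 B2" shows "rep2 (\<lambda>F G. B1 F G + B2 F G)"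
proof -
  obtain n1 a1 b1 where 1: "\<And>F G. cfun F \<Longrightarrow> cfun G \<Longrightarrow> B1 F G = (\<Sum>i<(n1::nat). F (a1 i) * G (b1 i))"
    using assms(1) unfolding rep2_def by blast
  obtain n2 a2 b2 where 2: "\<And>F G. cfun F \<Longrightarrow> cfun G \<Longrightarrow> B2 F G = (\<Sum>i<(n2::nat). F (a2 i) * G (b2 i))"
    using assms(2) unfolding rep2_def by blast
  show ?thesis
    by (rule rep2_I[of "{..<n1} <+> {..<n2}" _ "case_sum a1 a2" "case_sum b1 b2"])
       (simp_all add: 1 2 sum.Plus comp_def)
qed

lemma rep2_scale:
  assumes "rep2 B" shows "rep2 (\<lambda>F G. c * B F G)"
proof -
  obtain n a b where 1: "\<And>F G. cfun F \<Longrightarrow> cfun G \<Longrightarrow> B F G = (\<Sum>i<(n::nat). F (a i) * G (b i))"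
    using assms unfolding rep2_def by blast
  show ?thesis
    by (rule rep2_I[of "{..<n}" _ "\<lambda>i. cscale c (a i)" b])
       (simp_all add: 1 sum_distrib_left cfun_scale)
qed

lemma rep2_diff:
  assumes "rep2 B1" "rep2 B2" shows "rep2 (\<lambda>F G. B1 F G - B2 F G)"
  using rep2_add[OF assms(1) rep2_scale[OF assms(2), of "-1"]] by simp

lemma rep2_sum:
  assumes "finite J" "\<And>j. j \<in> J \<Longrightarrow> rep2 (B j)" shows "rep2 (\<lambda>F G. \<Sum>j\<in>J. B j F G)"
  using assms
proof (induction J rule: finite_induct)
  case empty then show ?case by (simp add: rep2_zero)
next
  case (insert x J) then show ?case by (simp add: rep2_add)
qed

lemma rep2_cong:
  assumes "rep2 B" "\<And>F G. cfun F \<Longrightarrow> cfun G \<Longrightarrow> B' F G = B F G" shows "rep2 B'"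
  using assms unfolding rep2_def by metis

lemma rep2_rs1: assumes "rep2 B" shows "rep2 (\<lambda>F G. B (rs F u) G)"
proof -
  obtain n a b where 1: "\<And>F G. cfun F \<Longrightarrow> cfun G \<Longrightarrow> B F G = (\<Sum>i<(n::nat). F (a i) * G (b i))"
    using assms unfolding rep2_def by blast
  show ?thesis by (rule rep2_I[of "{..<n}" _ "\<lambda>i. a i * u" b]) (simp_all add: 1)
qed

lemma rep2_rs2: assumes "rep2 B" shows "rep2 (\<lambda>F G. B F (rs G u))"
proof -
  obtain n a b where 1: "\<And>F G. cfun F \<Longrightarrow> cfun G \<Longrightarrow> B F G = (\<Sum>i<(n::nat). F (a i) * G (b i))"
    using assms unfolding rep2_def by blast
  show ?thesis by (rule rep2_I[of "{..<n}" _ a "\<lambda>i. b i * u"]) (simp_all add: 1)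
qed

lemma rep2_ls1: assumes "rep2 B" shows "rep2 (\<lambda>F G. B (ls u F) G)"
proof -
  obtain n a b where 1: "\<And>F G. cfun F \<Longrightarrow> cfun G \<Longrightarrow> B F G = (\<Sum>i<(n::nat). F (a i) * G (b i))"
    using assms unfolding rep2_def by blast
  show ?thesis by (rule rep2_I[of "{..<n}" _ "\<lambda>i. u * a i" b]) (simp_all add: 1)
qed

lemma rep2_ls2: assumes "rep2 B" shows "rep2 (\<lambda>F G. B F (ls u G))"
proof -
  obtain n a b where 1: "\<And>F G. cfun F \<Longrightarrow> cfun G \<Longrightarrow> B F G = (\<Sum>i<(n::nat). F (a i) * G (b i))"
    using assms unfolding rep2_def by blast
  show ?thesis by (rule rep2_I[of "{..<n}" _ a "\<lambda>i. u * b i"]) (simp_all add: 1)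
qed

lemma rep2_sl1:
  assumes "rep2 B" "cfun H" shows "\<exists>s. \<forall>F. cfun F \<longrightarrow> B F H = F s"
proof -
  obtain n a b where 1: "\<And>F G. cfun F \<Longrightarrow> cfun G \<Longrightarrow> B F G = (\<Sum>i<(n::nat). F (a i) * G (b i))"
    using assms unfolding rep2_def by blast
  show ?thesis
    by (rule exI[of _ "\<Sum>i<n. cscale (H (b i)) (a i)"])
       (simp_all add: 1 assms(2) cfun_sum cfun_scale mult.commute)
qed

lemma rep2_sl2:
  assumes "rep2 B" "cfun H" shows "\<exists>s. \<forall>G. cfun G \<longrightarrow> B H G = G s"
proof -
  obtain n a b where 1: "\<And>F G. cfun F \<Longrightarrow> cfun G \<Longrightarrow> B F G = (\<Sum>i<(n::nat). F (a i) * G (b i))"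
    using assms unfolding rep2_def by blast
  show ?thesis
    by (rule exI[of _ "\<Sum>i<n. cscale (H (a i)) (b i)"])
       (simp_all add: 1 assms(2) cfun_sum cfun_scale mult.commute)
qed

lemma rep2_lin1:
  assumes "rep2 B" "cfun G" "cfun F1" "cfun F2"
  shows "B (\<lambda>x. F1 x + F2 x) G = B F1 G + B F2 G"
proof -
  obtain n a b where 1: "\<And>F G. cfun F \<Longrightarrow> cfun G \<Longrightarrow> B F G = (\<Sum>i<(n::nat). F (a i) * G (b i))"
    using assms(1) unfolding rep2_def by blast
  have "cfun (\<lambda>x. F1 x + F2 x)" using assms(3,4) unfolding cfun_def by (auto simp: algebra_simps)
  then show ?thesis using assms by (simp add: 1 sum.distrib distrib_right)
qed

section \<open>Nondegeneracy\<close>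

lemma nd_r: "nondegenerate TYPE('a::calg) \<Longrightarrow> (\<And>u. (s::'a) * u = 0) \<Longrightarrow> s = 0"
  unfolding nondegenerate_def by blast

lemma nd_l: "nondegenerate TYPE('a::calg) \<Longrightarrow> (\<And>u. u * (s::'a) = 0) \<Longrightarrow> s = 0"
  unfolding nondegenerate_def by blast

lemma ND_R1:
  assumes nd: "nondegenerate TYPE('a::calg)" and B: "rep2 (B :: ('a \<Rightarrow> complex) \<Rightarrow> _)"
    and h: "\<And>F G u. cfun F \<Longrightarrow> cfun G \<Longrightarrow> B (rs F u) G = 0"
    and F: "cfun F" and G: "cfun G"
  shows "B F G = 0"
proof -
  obtain s where s: "\<And>F. cfun F \<Longrightarrow> B F G = F s" using rep2_sl1[OF B G] by blast
  have "s * u = 0" for u using sep0[of "s * u"] h[OF _ G, of _ u] s by simp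
  then have "s = 0" using nd_r[OF nd] by blast
  then show ?thesis using s[OF F] cfun_zero[OF F] by simp
qed

lemma ND_R2:
  assumes nd: "nondegenerate TYPE('a::calg)" and B: "rep2 (B :: ('a \<Rightarrow> complex) \<Rightarrow> _)"
    and h: "\<And>F G u. cfun F \<Longrightarrow> cfun G \<Longrightarrow> B F (rs G u) = 0"
    and F: "cfun F" and G: "cfun G"
  shows "B F G = 0"
proof -
  obtain s where s: "\<And>G. cfun G \<Longrightarrow> B F G = G s" using rep2_sl2[OF B F] by blast
  have "s * u = 0" for u using sep0[of "s * u"] h[OF F, of _ u] s by simp
  then have "s = 0" using nd_r[OF nd] by blast
  then show ?thesis using s[OF G] cfun_zero[OF G] by simp
qed

lemma ND_L1:
  assumes nd: "nondegenerate TYPE('a::calg)" and B: "rep2 (B :: ('a \<Rightarrow> complex) \<Rightarrow> _)"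
    and h: "\<And>F G u. cfun F \<Longrightarrow> cfun G \<Longrightarrow> B (ls u F) G = 0"
    and F: "cfun F" and G: "cfun G"
  shows "B F G = 0"
proof -
  obtain s where s: "\<And>F. cfun F \<Longrightarrow> B F G = F s" using rep2_sl1[OF B G] by blast
  have "u * s = 0" for u using sep0[of "u * s"] h[OF _ G, of _ u] s by simp
  then have "s = 0" using nd_l[OF nd] by blast
  then show ?thesis using s[OF F] cfun_zero[OF F] by simp
qed

lemma ND_L2:
  assumes nd: "nondegenerate TYPE('a::calg)" and B: "rep2 (B :: ('a \<Rightarrow> complex) \<Rightarrow> _)"
    and h: "\<And>F G u. cfun F \<Longrightarrow> cfun G \<Longrightarrow> B F (ls u G) = 0"
    and F: "cfun F" and G: "cfun G"
  shows "B F G = 0"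
proof -
  obtain s where s: "\<And>G. cfun G \<Longrightarrow> B F G = G s" using rep2_sl2[OF B F] by blast
  have "u * s = 0" for u using sep0[of "u * s"] h[OF F, of _ u] s by simp
  then have "s = 0" using nd_l[OF nd] by blast
  then show ?thesis using s[OF G] cfun_zero[OF G] by simp
qed

lemma ND_R1_eq:
  assumes nd: "nondegenerate TYPE('a::calg)" and B: "rep2 (B1 :: ('a \<Rightarrow> complex) \<Rightarrow> _)" "rep2 B2"
    and h: "\<And>F G u. cfun F \<Longrightarrow> cfun G \<Longrightarrow> B1 (rs F u) G = B2 (rs F u) G"
    and F: "cfun F" and G: "cfun G"
  shows "B1 F G = B2 F G"
  using ND_R1[OF nd rep2_diff[OF B] _ F G] h by simp

lemma ND_R2_eq:
  assumes nd: "nondegenerate TYPE('a::calg)" and B: "rep2 (B1 :: ('a \<Rightarrow> complex) \<Rightarrow> _)" "rep2 B2"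
    and h: "\<And>F G u. cfun F \<Longrightarrow> cfun G \<Longrightarrow> B1 F (rs G u) = B2 F (rs G u)"
    and F: "cfun F" and G: "cfun G"
  shows "B1 F G = B2 F G"
  using ND_R2[OF nd rep2_diff[OF B] _ F G] h by simp

lemma ND_L1_eq:
  assumes nd: "nondegenerate TYPE('a::calg)" and B: "rep2 (B1 :: ('a \<Rightarrow> complex) \<Rightarrow> _)" "rep2 B2"
    and h: "\<And>F G u. cfun F \<Longrightarrow> cfun G \<Longrightarrow> B1 (ls u F) G = B2 (ls u F) G"
    and F: "cfun F" and G: "cfun G"
  shows "B1 F G = B2 F G"
  using ND_L1[OF nd rep2_diff[OF B] _ F G] h by simp

lemma ND_L2_eq:
  assumes nd: "nondegenerate TYPE('a::calg)" and B: "rep2 (B1 :: ('a \<Rightarrow> complex) \<Rightarrow> _)" "rep2 B2"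
    and h: "\<And>F G u. cfun F \<Longrightarrow> cfun G \<Longrightarrow> B1 F (ls u G) = B2 F (ls u G)"
    and F: "cfun F" and G: "cfun G"
  shows "B1 F G = B2 F G"
  using ND_L2[OF nd rep2_diff[OF B] _ F G] h by simp

lemma ND_RR_eq:
  assumes nd: "nondegenerate TYPE('a::calg)" and B: "rep2 (B1 :: ('a \<Rightarrow> complex) \<Rightarrow> _)" "rep2 B2"
    and h: "\<And>f g u v. cfun f \<Longrightarrow> cfun g \<Longrightarrow> B1 (rs f u) (rs g v) = B2 (rs f u) (rs g v)"
    and F: "cfun F" and G: "cfun G"
  shows "B1 F G = B2 F G"
proof (rule ND_R1_eq[OF nd B _ F G])
  fix F G :: "'a \<Rightarrow> complex" and u :: 'a assume "cfun F" "cfun G"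
  show "B1 (rs F u) G = B2 (rs F u) G"
    by (rule ND_R2_eq[OF nd rep2_rs1[OF B(1)] rep2_rs1[OF B(2)] _ \<open>cfun F\<close> \<open>cfun G\<close>]) (rule h)
qed

lemma ND_LL_eq:
  assumes nd: "nondegenerate TYPE('a::calg)" and B: "rep2 (B1 :: ('a \<Rightarrow> complex) \<Rightarrow> _)" "rep2 B2"
    and h: "\<And>f g u v. cfun f \<Longrightarrow> cfun g \<Longrightarrow> B1 (ls u f) (ls v g) = B2 (ls u f) (ls v g)"
    and F: "cfun F" and G: "cfun G"
  shows "B1 F G = B2 F G"
proof (rule ND_L1_eq[OF nd B _ F G])
  fix F G :: "'a \<Rightarrow> complex" and u :: 'a assume "cfun F" "cfun G"
  show "B1 (ls u F) G = B2 (ls u F) G"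
    by (rule ND_L2_eq[OF nd rep2_ls1[OF B(1)] rep2_ls1[OF B(2)] _ \<open>cfun F\<close> \<open>cfun G\<close>]) (rule h)
qed


section \<open>Extensionality of T2 via product functionals\<close>

lemma bil_cfun1: "bil \<beta> \<Longrightarrow> cfun (\<lambda>x. \<beta> x y)" by (simp add: bil_def)
lemma bil_cfun2: "bil \<beta> \<Longrightarrow> cfun (\<beta> x)" by (simp add: bil_def)

lemma key_lemma:
  fixes a b :: "'i \<Rightarrow> 'a::calg"
  assumes fin: "finite I"
    and h: "\<And>f g. cfun f \<Longrightarrow> cfun g \<Longrightarrow> (\<Sum>i\<in>I. f (a i) * g (b i)) = 0"
    and \<beta>: "bil \<beta>"
  shows "(\<Sum>i\<in>I. \<beta> (a i) (b i)) = 0"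
proof -
  obtain BB :: "'a set" where BB: "CV.independent BB" "UNIV \<subseteq> CV.span BB"
    using CV.maximal_independent_subset[of UNIV] by blast
  define co where "co e x = CV.representation BB x e" for e x
  have spx: "x \<in> CV.span BB" for x using BB(2) by blast
  have cco: "cfun (\<lambda>x. co e x)" for e
    unfolding cfun_def co_def
    by (simp add: CV.representation_add[OF BB(1) spx spx] CV.representation_scale[OF BB(1) spx])
  define E where "E = (\<Union>i\<in>I. {e. co e (a i) \<noteq> 0})"
  have finE: "finite E" unfolding E_def co_def using fin CV.finite_representation by blast
  have exp: "a i = (\<Sum>e\<in>E. cscale (co e (a i)) e)" if "i \<in> I" for i
  proof -
    have "(\<Sum>e\<in>E. cscale (co e (a i)) e) = (\<Sum>e | co e (a i) \<noteq> 0. cscale (co e (a i)) e)"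
      by (rule sum.mono_neutral_right[OF finE]) (use that in \<open>auto simp: E_def\<close>)
    also have "\<dots> = a i" unfolding co_def by (rule CV.sum_nonzero_representation_eq[OF BB(1) spx])
    finally show ?thesis by simp
  qed
  have inner: "(\<Sum>i\<in>I. cscale (co e (a i)) (b i)) = 0" for e
  proof (rule sep0)
    fix g :: "'a \<Rightarrow> complex" assume g: "cfun g"
    have "g (\<Sum>i\<in>I. cscale (co e (a i)) (b i)) = (\<Sum>i\<in>I. co e (a i) * g (b i))"
      by (simp add: cfun_sum[OF g] cfun_scale[OF g])
    also have "\<dots> = 0" using h[OF cco g] .
    finally show "g (\<Sum>i\<in>I. cscale (co e (a i)) (b i)) = 0" .
  qed
  have "(\<Sum>i\<in>I. \<beta> (a i) (b i)) = (\<Sum>i\<in>I. \<Sum>e\<in>E. co e (a i) * \<beta> e (b i))"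
  proof (rule sum.cong[OF refl])
    fix i assume i: "i \<in> I"
    have "\<beta> (a i) (b i) = \<beta> (\<Sum>e\<in>E. cscale (co e (a i)) e) (b i)" using exp[OF i] by simp
    also have "\<dots> = (\<Sum>e\<in>E. co e (a i) * \<beta> e (b i))"
      by (simp add: cfun_sum[OF bil_cfun1[OF \<beta>, of "b i"]] cfun_scale[OF bil_cfun1[OF \<beta>, of "b i"]])
    finally show "\<beta> (a i) (b i) = (\<Sum>e\<in>E. co e (a i) * \<beta> e (b i))" .
  qed
  also have "\<dots> = (\<Sum>e\<in>E. \<Sum>i\<in>I. co e (a i) * \<beta> e (b i))" by (rule sum.swap)
  also have "\<dots> = (\<Sum>e\<in>E. \<beta> e (\<Sum>i\<in>I. cscale (co e (a i)) (b i)))"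
    by (simp add: cfun_sum[OF bil_cfun2[OF \<beta>]] cfun_scale[OF bil_cfun2[OF \<beta>]])
  also have "\<dots> = 0" using inner cfun_zero[OF bil_cfun2[OF \<beta>]] by simp
  finally show ?thesis .
qed

lemma ext2:
  fixes Z1 Z2 :: "'a::calg t2"
  assumes "Z1 \<in> T2" "Z2 \<in> T2" "\<And>f g. cfun f \<Longrightarrow> cfun g \<Longrightarrow> ev Z1 f g = ev Z2 f g"
  shows "Z1 = Z2"
proof
  fix \<beta> :: "'a \<Rightarrow> 'a \<Rightarrow> complex"
  obtain n1 a1 b1 where 1: "Z1 = tsum {..<(n1::nat)} a1 b1" using T2_tsum[OF assms(1)] by blast
  obtain n2 a2 b2 where 2: "Z2 = tsum {..<(n2::nat)} a2 b2" using T2_tsum[OF assms(2)] by blast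
  define I where "I = {..<n1} <+> {..<n2}"
  define a where "a = case_sum a1 a2"
  define b where "b = case_sum b1 (\<lambda>i. - b2 i)"
  have finI: "finite I" by (simp add: I_def)
  have split: "(\<Sum>i\<in>I. f (a i) * g (b i)) = (\<Sum>i<n1. f (a1 i) * g (b1 i)) - (\<Sum>i<n2. f (a2 i) * g (b2 i))"
    if "cfun g" for f g
    by (simp add: I_def a_def b_def sum.Plus cfun_neg[OF that] sum_negf)
  have "(\<Sum>i\<in>I. f (a i) * g (b i)) = 0" if "cfun f" "cfun g" for f g
    using assms(3)[OF that] split[OF that(2)] that by (simp add: 1 2 ev_tsum)
  then have k: "bil \<beta> \<Longrightarrow> (\<Sum>i\<in>I. \<beta> (a i) (b i)) = 0" using key_lemma[OF finI] by blast
  show "Z1 \<beta> = Z2 \<beta>"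
  proof (cases "bil \<beta>")
    case True
    have "(\<Sum>i\<in>I. \<beta> (a i) (b i)) = (\<Sum>i<n1. \<beta> (a1 i) (b1 i)) - (\<Sum>i<n2. \<beta> (a2 i) (b2 i))"
      by (simp add: I_def a_def b_def sum.Plus cfun_neg[OF bil_cfun2[OF True]] sum_negf)
    then show ?thesis using k[OF True] True by (simp add: 1 2 tsum_def)
  qed (simp add: 1 2 tsum_def)
qed



lemma cfun_rs'[simp]: "cfun f \<Longrightarrow> cfun (\<lambda>x. f (x * u))"
  using cfun_rs[of f u] by (simp add: rs_def)
lemma cfun_ls'[simp]: "cfun f \<Longrightarrow> cfun (\<lambda>x. f (u * x))"
  using cfun_ls[of f u] by (simp add: ls_def)

lemma bilI:
  assumes "\<And>a. cfun (\<beta> a)" "\<And>b. cfun (\<lambda>a. \<beta> a b)" shows "bil \<beta>"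
  using assms by (simp add: bil_def)

lemma bil_mult_r: "bil \<beta> \<Longrightarrow> bil (\<lambda>x y. \<beta> x y * c)"
  unfolding bil_def cfun_def by (simp add: distrib_right)

lemma bil_mult_l: "bil \<beta> \<Longrightarrow> bil (\<lambda>x y. c * \<beta> x y)"
  unfolding bil_def cfun_def by (simp add: distrib_left mult.left_commute)

lemma cfun_sumI: "finite I \<Longrightarrow> (\<And>i. i \<in> I \<Longrightarrow> cfun (f i)) \<Longrightarrow> cfun (\<lambda>x. \<Sum>i\<in>I. f i x)"
  unfolding cfun_def by (simp add: sum.distrib sum_distrib_left)

lemma bil_sum: "finite I \<Longrightarrow> (\<And>i. i \<in> I \<Longrightarrow> bil (\<beta> i)) \<Longrightarrow> bil (\<lambda>x y. \<Sum>i\<in>I. \<beta> i x y)"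
  unfolding bil_def by (auto intro!: cfun_sumI)

lemma T2_hom_r: assumes "Z \<in> T2" "bil \<beta>" shows "Z (\<lambda>x y. \<beta> x y * c) = Z \<beta> * c"
proof -
  obtain n a b where Z: "Z = tsum {..<(n::nat)} a b" using T2_tsum[OF assms(1)] by blast
  show ?thesis using assms(2) bil_mult_r[OF assms(2)] by (simp add: Z tsum_def sum_distrib_right)
qed

lemma T2_hom_l: assumes "Z \<in> T2" "bil \<beta>" shows "Z (\<lambda>x y. c * \<beta> x y) = c * Z \<beta>"
proof -
  obtain n a b where Z: "Z = tsum {..<(n::nat)} a b" using T2_tsum[OF assms(1)] by blast
  show ?thesis using assms(2) bil_mult_l[OF assms(2)] by (simp add: Z tsum_def sum_distrib_left)
qed

lemma T2_sum: assumes "Z \<in> T2" "finite I" "\<And>i. i \<in> I \<Longrightarrow> bil (\<beta> i)"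
  shows "Z (\<lambda>x y. \<Sum>i\<in>I. \<beta> i x y) = (\<Sum>i\<in>I. Z (\<beta> i))"
proof -
  obtain n a b where Z: "Z = tsum {..<(n::nat)} a b" using T2_tsum[OF assms(1)] by blast
  have "(\<Sum>j<n. \<Sum>i\<in>I. \<beta> i (a j) (b j)) = (\<Sum>i\<in>I. \<Sum>j<n. \<beta> i (a j) (b j))" by (rule sum.swap)
  then show ?thesis using bil_sum[OF assms(2,3)] assms(3) by (simp add: Z tsum_def)
qed

lemma ev_mult2_r:
  assumes Z: "Z \<in> T2" and f: "cfun f" and g: "cfun g" and I: "finite I"
  shows "ev (mult2 Z (tsum I c d)) f g = (\<Sum>i\<in>I. ev Z (rs f (c i)) (rs g (d i)))"
proof -
  have in1: "tsum I c d (\<lambda>c' d'. f (a * c') * g (b * d')) = (\<Sum>i\<in>I. f (a * c i) * g (b * d i))" for a b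
    using ev_tsum[OF cfun_ls[OF f, of a] cfun_ls[OF g, of b], of I c d] by (simp add: ev_def)
  have "mult2 Z (tsum I c d) (\<lambda>x y. f x * g y) = Z (\<lambda>a b. \<Sum>i\<in>I. f (a * c i) * g (b * d i))"
    unfolding mult2_def g2_def using bil_prod[OF f g] by (simp add: in1)
  also have "\<dots> = (\<Sum>i\<in>I. Z (\<lambda>a b. f (a * c i) * g (b * d i)))"
    using T2_sum[OF Z I, of "\<lambda>i a b. f (a * c i) * g (b * d i)"]
      bil_prod[OF cfun_rs[OF f] cfun_rs[OF g]] by simp
  finally show ?thesis by (simp add: ev_def)
qed

lemma ev_mult2_tp_r:
  "Z \<in> T2 \<Longrightarrow> cfun f \<Longrightarrow> cfun g \<Longrightarrow> ev (mult2 Z (tp u v)) f g = ev Z (rs f u) (rs g v)"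
  using ev_mult2_r[of Z f g "{()}" "\<lambda>_. u" "\<lambda>_. v"] by (simp add: tp_tsum)

lemma bil_ev_ls:
  assumes Z: "Z \<in> T2" and f: "cfun f" and g: "cfun g"
  shows "bil (\<lambda>a b. ev Z (ls a f) (ls b g))"
proof -
  obtain n x y where Zt: "Z = tsum {..<(n::nat)} x y" using T2_tsum[OF Z] by blast
  have "bil (\<lambda>a b. \<Sum>j<n. rs f (x j) a * rs g (y j) b)"
    by (rule bil_sum) (auto intro!: bil_prod simp: f g)
  then show ?thesis by (simp add: Zt ev_tsum f g)
qed

lemma ev_mult2_l:
  assumes Z: "Z \<in> T2" and f: "cfun f" and g: "cfun g" and I: "finite I"
  shows "ev (mult2 (tsum I c d) Z) f g = (\<Sum>i\<in>I. ev Z (ls (c i) f) (ls (d i) g))"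
proof -
  have b: "bil (\<lambda>a b. Z (\<lambda>c' d'. f (a * c') * g (b * d')))"
    using bil_ev_ls[OF Z f g] by (simp add: ev_def)
  show ?thesis
    unfolding mult2_def g2_def ev_def tsum_def using bil_prod[OF f g] b by simp
qed

lemma ev_mult2_tp_l:
  "Z \<in> T2 \<Longrightarrow> cfun f \<Longrightarrow> cfun g \<Longrightarrow> ev (mult2 (tp u v) Z) f g = ev Z (ls u f) (ls v g)"
  using ev_mult2_l[of Z f g "{()}" "\<lambda>_. u" "\<lambda>_. v"] by (simp add: tp_tsum)

lemma ev_one_t_fst: "cfun f \<Longrightarrow> cfun g \<Longrightarrow> ev (fst (one_t b) Z) f g = ev Z f (ls b g)"
  by (simp add: one_t_def ev_def g2_def bil_prod)
lemma ev_one_t_snd: "cfun f \<Longrightarrow> cfun g \<Longrightarrow> ev (snd (one_t b) Z) f g = ev Z f (rs g b)"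
  by (simp add: one_t_def ev_def g2_def bil_prod)
lemma ev_t_one_fst: "cfun f \<Longrightarrow> cfun g \<Longrightarrow> ev (fst (t_one b) Z) f g = ev Z (ls b f) g"
  by (simp add: t_one_def ev_def g2_def bil_prod)
lemma ev_t_one_snd: "cfun f \<Longrightarrow> cfun g \<Longrightarrow> ev (snd (t_one b) Z) f g = ev Z (rs f b) g"
  by (simp add: t_one_def ev_def g2_def bil_prod)

lemma bil_ls2: "bil \<beta> \<Longrightarrow> bil (\<lambda>x z. \<beta> x (b * z))"
  unfolding bil_def cfun_def by (simp add: distrib_left cs_mult_right)
lemma bil_ls1: "bil \<beta> \<Longrightarrow> bil (\<lambda>x z. \<beta> (b * x) z)"
  unfolding bil_def cfun_def by (simp add: distrib_left cs_mult_right)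

lemma one_t_tp: "fst (one_t b) (tp u v) = tp u (b * v)"
  by (rule ext) (simp add: one_t_def tp_def g2_def bil_ls2)
lemma t_one_tp: "fst (t_one b) (tp u v) = tp (b * u) v"
  by (rule ext) (simp add: t_one_def tp_def g2_def bil_ls1)

lemma slice_r_ev:
  assumes Z: "Z \<in> T2" and h: "cfun h" and g: "cfun g"
  shows "ev Z g h = g (slice_r h Z)"
proof -
  have "\<exists>x. \<forall>g. cfun g \<longrightarrow> Z (\<lambda>u v. g u * h v) = g x"
    using rep2_sl1[OF rep2_ev[OF Z] h] by (simp add: ev_def)
  then have "\<forall>g. cfun g \<longrightarrow> Z (\<lambda>u v. g u * h v) = g (slice_r h Z)"
    unfolding slice_r_def by (rule someI_ex)
  then show ?thesis using g by (simp add: ev_def)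
qed

lemma slice_l_ev:
  assumes Z: "Z \<in> T2" and h: "cfun h" and g: "cfun g"
  shows "ev Z h g = g (slice_l h Z)"
proof -
  have "\<exists>x. \<forall>g. cfun g \<longrightarrow> Z (\<lambda>u v. h u * g v) = g x"
    using rep2_sl2[OF rep2_ev[OF Z] h] by (simp add: ev_def)
  then have "\<forall>g. cfun g \<longrightarrow> Z (\<lambda>u v. h u * g v) = g (slice_l h Z)"
    unfolding slice_l_def by (rule someI_ex)
  then show ?thesis using g by (simp add: ev_def)
qed

lemma as2_props: "in2 m \<Longrightarrow> as2 m \<in> T2 \<and> mult_eq T2 (emb mult2 (as2 m)) m"
proof -
  assume "in2 m"
  then have "\<exists>t. t \<in> T2 \<and> mult_eq T2 (emb mult2 t) m" unfolding in2_def by blast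
  then show ?thesis unfolding as2_def by (rule someI_ex)
qed

lemma as2_T2: "in2 m \<Longrightarrow> as2 m \<in> T2" using as2_props by blast

lemma as2_fst: "in2 m \<Longrightarrow> y \<in> T2 \<Longrightarrow> mult2 (as2 m) y = fst m y"
  using as2_props[of m] by (simp add: mult_eq_def emb_def)

lemma as2_snd: "in2 m \<Longrightarrow> y \<in> T2 \<Longrightarrow> mult2 y (as2 m) = snd m y"
  using as2_props[of m] by (simp add: mult_eq_def emb_def)

lemma clin_add: "clin S \<Longrightarrow> S (x + y) = S x + S y" and clin_scale: "clin S \<Longrightarrow> S (cscale c x) = cscale c (S x)"
  by (auto simp: clin_def)

lemma cfun_comp: "cfun f \<Longrightarrow> clin S \<Longrightarrow> cfun (\<lambda>x. f (S x))"
  unfolding cfun_def by (simp add: clin_add clin_scale)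

lemma bil_flip: assumes "bil \<beta>" "clin S" shows "bil (\<lambda>a b. \<beta> (S b) (S a))"
proof (rule bilI)
  fix a show "cfun (\<lambda>b. \<beta> (S b) (S a))" using cfun_comp[OF bil_cfun1[OF assms(1)] assms(2)] .
next
  fix b show "cfun (\<lambda>a. \<beta> (S b) (S a))" using cfun_comp[OF bil_cfun2[OF assms(1)] assms(2)] .
qed

lemma flipSS_tsum: "clin S \<Longrightarrow> flipSS S (tsum I a b) = tsum I (\<lambda>i. S (b i)) (\<lambda>i. S (a i))"
  by (rule ext) (simp add: flipSS_def tsum_def g2_def bil_flip)

lemma flipSS_T2: "Z \<in> T2 \<Longrightarrow> clin S \<Longrightarrow> flipSS S Z \<in> T2"
  by (auto dest!: T2_tsum simp: flipSS_tsum tsum_T2)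

lemma ev_flipSS: "cfun f \<Longrightarrow> cfun g \<Longrightarrow> ev (flipSS S Z) f g = ev Z (\<lambda>x. g (S x)) (\<lambda>x. f (S x))"
  by (simp add: flipSS_def ev_def g2_def bil_prod mult.commute)

lemma flipSS_addt: "flipSS S (addt A B) = addt (flipSS S A) (flipSS S B)"
  by (rule ext) (simp add: flipSS_def addt_def g2_def)
lemma flipSS_scalet: "flipSS S (scalet c A) = scalet c (flipSS S A)"
  by (rule ext) (simp add: flipSS_def scalet_def g2_def)
lemma flipSS_zero: "flipSS S (\<lambda>\<beta>. 0) = (\<lambda>\<beta>. 0)"
  by (rule ext) (simp add: flipSS_def g2_def)

lemma clin_inv:
  assumes b: "bij S" and c: "clin S" shows "clin (inv S)"
proof -
  have sI: "S (inv S x) = x" for x using b by (simp add: bij_is_surj surj_f_inv_f)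
  have iS: "inv S (S x) = x" for x using b by (simp add: bij_is_inj)
  show ?thesis unfolding clin_def
  proof (intro conjI allI)
    fix x y show "inv S (x + y) = inv S x + inv S y"
      using iS[of "inv S x + inv S y"] by (simp add: clin_add[OF c] sI)
  next
    fix a x show "inv S (cscale a x) = cscale a (inv S x)"
      using iS[of "cscale a (inv S x)"] by (simp add: clin_scale[OF c] sI)
  qed
qed

lemma tril_prod: "cfun f \<Longrightarrow> cfun g \<Longrightarrow> cfun h \<Longrightarrow> tril (\<lambda>x y z. f x * g y * h z)"
  unfolding tril_def cfun_def by (simp add: distrib_left distrib_right mult.left_commute)

lemma tp3_T3[simp]: "tp3 u v w \<in> T3"
  unfolding T3_def
  by (intro CollectI exI[of _ "1::nat"] exI[of _ "\<lambda>_. u"] exI[of _ "\<lambda>_. v"] exI[of _ "\<lambda>_. w"]) simp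

lemma tril_ls3: "tril \<gamma> \<Longrightarrow> tril (\<lambda>x y z. \<gamma> x y (c * z))"
  unfolding tril_def cfun_def by (simp add: distrib_left cs_mult_right)

lemma one_one_t_tp3: "fst (one_one_t c) (tp3 u v w) = tp3 u v (c * w)"
  by (rule ext) (simp add: one_one_t_def tp3_def g3_def tril_ls3)



lemma rep2_lin2:
  assumes "rep2 B" "cfun F" "cfun G1" "cfun G2"
  shows "B F (\<lambda>x. G1 x + G2 x) = B F G1 + B F G2"
proof -
  obtain n a b where 1: "\<And>F G. cfun F \<Longrightarrow> cfun G \<Longrightarrow> B F G = (\<Sum>i<(n::nat). F (a i) * G (b i))"
    using assms(1) unfolding rep2_def by blast
  have "cfun (\<lambda>x. G1 x + G2 x)" using assms(3,4) unfolding cfun_def by (simp add: distrib_left)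
  then show ?thesis using assms by (simp add: 1 sum.distrib distrib_left)
qed

lemma rep2_hom1:
  assumes "rep2 B" "cfun F" "cfun G"
  shows "B (\<lambda>x. c * F x) G = c * B F G"
proof -
  obtain n a b where 1: "\<And>F G. cfun F \<Longrightarrow> cfun G \<Longrightarrow> B F G = (\<Sum>i<(n::nat). F (a i) * G (b i))"
    using assms(1) unfolding rep2_def by blast
  have "B (\<lambda>x. c * F x) G = (\<Sum>i<n. (c * F (a i)) * G (b i))"
    using 1[OF cfun_mult_const[OF assms(2)] assms(3)] .
  also have "\<dots> = c * (\<Sum>i<n. F (a i) * G (b i))" by (simp only: sum_distrib_left mult.assoc)
  also have "\<dots> = c * B F G" using 1[OF assms(2,3)] by simp
  finally show ?thesis .
qed

lemma rep2_hom2: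
  assumes "rep2 B" "cfun F" "cfun G"
  shows "B F (\<lambda>x. c * G x) = c * B F G"
proof -
  obtain n a b where 1: "\<And>F G. cfun F \<Longrightarrow> cfun G \<Longrightarrow> B F G = (\<Sum>i<(n::nat). F (a i) * G (b i))"
    using assms(1) unfolding rep2_def by blast
  have "B F (\<lambda>x. c * G x) = (\<Sum>i<n. F (a i) * (c * G (b i)))"
    using 1[OF assms(2) cfun_mult_const[OF assms(3)]] .
  also have "\<dots> = c * (\<Sum>i<n. F (a i) * G (b i))" by (simp only: sum_distrib_left mult.left_commute)
  also have "\<dots> = c * B F G" using 1[OF assms(2,3)] by simp
  finally show ?thesis .
qed

lemma ev_addt: "ev (addt A B) f g = ev A f g + ev B f g" by (simp add: ev_def addt_def)
lemma ev_scalet: "ev (scalet c A) f g = c * ev A f g" by (simp add: ev_def scalet_def)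

lemma rs_add: "cfun f \<Longrightarrow> rs f (u1 + u2) = (\<lambda>x. rs f u1 x + rs f u2 x)"
  by (rule ext) (simp add: distrib_left cfun_add)
lemma rs_scale: "cfun f \<Longrightarrow> rs f (cscale c u) = (\<lambda>x. c * rs f u x)"
  by (rule ext) (simp add: cs_mult_right cfun_scale)
lemma ls_add: "cfun f \<Longrightarrow> ls (u1 + u2) f = (\<lambda>x. ls u1 f x + ls u2 f x)"
  by (rule ext) (simp add: distrib_right cfun_add)
lemma ls_scale: "cfun f \<Longrightarrow> ls (cscale c u) f = (\<lambda>x. c * ls u f x)"
  by (rule ext) (simp add: cs_mult_left cfun_scale)

locale aqh =
  fixes \<Delta> :: "'a::calg \<Rightarrow> 'a m2" and \<epsilon> :: "'a \<Rightarrow> complex" and S :: "'a \<Rightarrow> 'a"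
    and \<phi> :: "'a \<Rightarrow> complex"
  assumes nd: "nondegenerate TYPE('a)" and rc: "regular_comult \<Delta>" and cu: "counit \<Delta> \<epsilon>"
    and li: "left_integral \<Delta> \<phi>" and fa: "faithful \<phi>" and an: "antipode \<Delta> \<phi> S"
begin

lemma ismult: "is_mult T2 mult2 (\<Delta> a)" using rc by (simp add: regular_comult_def)

lemma Lf_T2: "y \<in> T2 \<Longrightarrow> fst (\<Delta> a) y \<in> T2" using ismult by (simp add: is_mult_def)
lemma Rg_T2: "y \<in> T2 \<Longrightarrow> snd (\<Delta> a) y \<in> T2" using ismult by (simp add: is_mult_def)
lemma compat: "x \<in> T2 \<Longrightarrow> y \<in> T2 \<Longrightarrow> mult2 x (fst (\<Delta> a) y) = mult2 (snd (\<Delta> a) x) y"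
  using ismult by (simp add: is_mult_def)

lemma D_add: "y \<in> T2 \<Longrightarrow> fst (\<Delta> (a + a')) y = addt (fst (\<Delta> a) y) (fst (\<Delta> a') y)"
  "y \<in> T2 \<Longrightarrow> snd (\<Delta> (a + a')) y = addt (snd (\<Delta> a) y) (snd (\<Delta> a') y)"
  using rc by (simp_all add: regular_comult_def)
lemma D_scale: "y \<in> T2 \<Longrightarrow> fst (\<Delta> (cscale c a)) y = scalet c (fst (\<Delta> a) y)"
  "y \<in> T2 \<Longrightarrow> snd (\<Delta> (cscale c a)) y = scalet c (snd (\<Delta> a) y)"
  using rc by (simp_all add: regular_comult_def)

lemma in2s: "in2 (mmul (\<Delta> a) (one_t b))" "in2 (mmul (t_one a) (\<Delta> b))"
  "in2 (mmul (\<Delta> a) (t_one b))" "in2 (mmul (one_t a) (\<Delta> b))"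
  using rc by (simp_all add: regular_comult_def)

definition Dv where "Dv a u v f g = ev (fst (\<Delta> a) (tp u v)) f g"
definition Ev where "Ev a x y f g = ev (snd (\<Delta> a) (tp x y)) f g"

lemma rep2_Dv: "rep2 (Dv a u v)"
proof -
  have "Dv a u v = ev (fst (\<Delta> a) (tp u v))" by (rule ext)+ (simp add: Dv_def)
  then show ?thesis using rep2_ev[OF Lf_T2[OF tp_T2]] by simp
qed

lemma rep2_Ev: "rep2 (Ev a x y)"
proof -
  have "Ev a x y = ev (snd (\<Delta> a) (tp x y))" by (rule ext)+ (simp add: Ev_def)
  then show ?thesis using rep2_ev[OF Rg_T2[OF tp_T2]] by simp
qed

lemma DE: "cfun f \<Longrightarrow> cfun g \<Longrightarrow> Dv a u v (ls x f) (ls y g) = Ev a x y (rs f u) (rs g v)"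
  unfolding Dv_def Ev_def
  by (simp add: ev_mult2_tp_l[symmetric] ev_mult2_tp_r[symmetric] Lf_T2 Rg_T2 compat)

lemma Dv_add_a: "Dv (a + a') u v f g = Dv a u v f g + Dv a' u v f g"
  by (simp add: Dv_def D_add ev_addt)
lemma Dv_scale_a: "Dv (cscale c a) u v f g = c * Dv a u v f g"
  by (simp add: Dv_def D_scale ev_scalet)
lemma Ev_add_a: "Ev (a + a') u v f g = Ev a u v f g + Ev a' u v f g"
  by (simp add: Ev_def D_add ev_addt)
lemma Ev_scale_a: "Ev (cscale c a) u v f g = c * Ev a u v f g"
  by (simp add: Ev_def D_scale ev_scalet)

lemma cfun_Dv_a: "cfun (\<lambda>a. Dv a u v f g)"
  unfolding cfun_def by (simp add: Dv_add_a Dv_scale_a)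
lemma cfun_Ev_a: "cfun (\<lambda>a. Ev a u v f g)"
  unfolding cfun_def by (simp add: Ev_add_a Ev_scale_a)

lemma Dv_add_u:
  assumes f: "cfun f" and g: "cfun g"
  shows "Dv a (u1 + u2) v f g = Dv a u1 v f g + Dv a u2 v f g"
proof (rule ND_LL_eq[OF nd rep2_Dv rep2_add[OF rep2_Dv rep2_Dv] _ f g])
  fix f g :: "'a \<Rightarrow> complex" and x y assume f: "cfun f" and g: "cfun g"
  show "Dv a (u1 + u2) v (ls x f) (ls y g) = Dv a u1 v (ls x f) (ls y g) + Dv a u2 v (ls x f) (ls y g)"
  proof -
    have "Ev a x y (\<lambda>z. rs f u1 z + rs f u2 z) (rs g v) = Ev a x y (rs f u1) (rs g v) + Ev a x y (rs f u2) (rs g v)"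
      by (rule rep2_lin1[OF rep2_Ev]) (simp_all add: f g)
    then show ?thesis by (simp add: DE f g rs_add)
  qed
qed

lemma Dv_scale_u:
  assumes f: "cfun f" and g: "cfun g"
  shows "Dv a (cscale c u) v f g = c * Dv a u v f g"
proof (rule ND_LL_eq[OF nd rep2_Dv rep2_scale[OF rep2_Dv] _ f g])
  fix f g :: "'a \<Rightarrow> complex" and x y assume f: "cfun f" and g: "cfun g"
  show "Dv a (cscale c u) v (ls x f) (ls y g) = c * Dv a u v (ls x f) (ls y g)"
  proof -
    have "Ev a x y (\<lambda>z. c * rs f u z) (rs g v) = c * Ev a x y (rs f u) (rs g v)"
      by (rule rep2_hom1[OF rep2_Ev]) (simp_all add: f g)
    then show ?thesis by (simp add: DE f g rs_scale)
  qed
qed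

lemma Dv_add_v:
  assumes f: "cfun f" and g: "cfun g"
  shows "Dv a u (v1 + v2) f g = Dv a u v1 f g + Dv a u v2 f g"
proof (rule ND_LL_eq[OF nd rep2_Dv rep2_add[OF rep2_Dv rep2_Dv] _ f g])
  fix f g :: "'a \<Rightarrow> complex" and x y assume f: "cfun f" and g: "cfun g"
  show "Dv a u (v1 + v2) (ls x f) (ls y g) = Dv a u v1 (ls x f) (ls y g) + Dv a u v2 (ls x f) (ls y g)"
  proof -
    have "Ev a x y (rs f u) (\<lambda>z. rs g v1 z + rs g v2 z) = Ev a x y (rs f u) (rs g v1) + Ev a x y (rs f u) (rs g v2)"
      by (rule rep2_lin2[OF rep2_Ev]) (simp_all add: f g)
    then show ?thesis by (simp add: DE f g rs_add)
  qed
qed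

lemma Dv_scale_v:
  assumes f: "cfun f" and g: "cfun g"
  shows "Dv a u (cscale c v) f g = c * Dv a u v f g"
proof (rule ND_LL_eq[OF nd rep2_Dv rep2_scale[OF rep2_Dv] _ f g])
  fix f g :: "'a \<Rightarrow> complex" and x y assume f: "cfun f" and g: "cfun g"
  show "Dv a u (cscale c v) (ls x f) (ls y g) = c * Dv a u v (ls x f) (ls y g)"
  proof -
    have "Ev a x y (rs f u) (\<lambda>z. c * rs g v z) = c * Ev a x y (rs f u) (rs g v)"
      by (rule rep2_hom2[OF rep2_Ev]) (simp_all add: f g)
    then show ?thesis by (simp add: DE f g rs_scale)
  qed
qed

lemma cfun_Dv_u: "cfun f \<Longrightarrow> cfun g \<Longrightarrow> cfun (\<lambda>u. Dv a u v f g)"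
  using Dv_add_u Dv_scale_u unfolding cfun_def[of "\<lambda>u. Dv a u v f g"] by blast
lemma cfun_Dv_v: "cfun f \<Longrightarrow> cfun g \<Longrightarrow> cfun (\<lambda>v. Dv a u v f g)"
  using Dv_add_v Dv_scale_v unfolding cfun_def[of "\<lambda>v. Dv a u v f g"] by blast

lemma DvS1:
  assumes f: "cfun f" and g: "cfun g"
  shows "Dv a (u * w) v f g = Dv a u v (rs f w) g"
proof (rule ND_LL_eq[OF nd rep2_Dv rep2_rs1[OF rep2_Dv] _ f g])
  fix f g :: "'a \<Rightarrow> complex" and x y assume f: "cfun f" and g: "cfun g"
  show "Dv a (u * w) v (ls x f) (ls y g) = Dv a u v (rs (ls x f) w) (ls y g)"
    by (simp add: DE f g ls_rs[symmetric] rs_rs)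
qed

lemma DvS2:
  assumes f: "cfun f" and g: "cfun g"
  shows "Dv a u (v * w) f g = Dv a u v f (rs g w)"
proof (rule ND_LL_eq[OF nd rep2_Dv rep2_rs2[OF rep2_Dv] _ f g])
  fix f g :: "'a \<Rightarrow> complex" and x y assume f: "cfun f" and g: "cfun g"
  show "Dv a u (v * w) (ls x f) (ls y g) = Dv a u v (ls x f) (rs (ls y g) w)"
    by (simp add: DE f g ls_rs[symmetric] rs_rs)
qed

end


lemma cfun_mult_const_r: "cfun f \<Longrightarrow> cfun (\<lambda>x. f x * c)"
  using cfun_mult_const[of f c] by (simp add: mult.commute)

lemma tril_I:
  assumes "\<And>y z. cfun (\<lambda>x. \<gamma> x y z)" "\<And>x z. cfun (\<lambda>y. \<gamma> x y z)" "\<And>x y. cfun (\<gamma> x y)"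
  shows "tril \<gamma>"
  using assms by (simp add: tril_def)

context aqh begin

definition M where "M a b = as2 (mmul (\<Delta> a) (one_t b))"
definition N where "N a b = as2 (mmul (one_t a) (\<Delta> b))"
definition P where "P a b = as2 (mmul (\<Delta> a) (t_one b))"
definition Q where "Q a b = as2 (mmul (t_one a) (\<Delta> b))"

lemma M_T2: "M a b \<in> T2" unfolding M_def by (rule as2_T2[OF in2s(1)])
lemma N_T2: "N a b \<in> T2" unfolding N_def by (rule as2_T2[OF in2s(4)])
lemma P_T2: "P a b \<in> T2" unfolding P_def by (rule as2_T2[OF in2s(3)])
lemma Q_T2: "Q a b \<in> T2" unfolding Q_def by (rule as2_T2[OF in2s(2)])

lemma rep2_M: "rep2 (ev (M a b))" by (rule rep2_ev[OF M_T2])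
lemma rep2_N: "rep2 (ev (N a b))" by (rule rep2_ev[OF N_T2])
lemma rep2_P: "rep2 (ev (P a b))" by (rule rep2_ev[OF P_T2])
lemma rep2_Q: "rep2 (ev (Q a b))" by (rule rep2_ev[OF Q_T2])

lemma HM: assumes f: "cfun f" and g: "cfun g"
  shows "ev (M a b) (rs f u) (rs g v) = Dv a u (b * v) f g"
proof -
  have eq: "mult2 (M a b) (tp u v) = fst (\<Delta> a) (tp u (b * v))"
    unfolding M_def as2_fst[OF in2s(1) tp_T2] by (simp add: mmul_def one_t_tp)
  show ?thesis unfolding Dv_def eq[symmetric] by (rule ev_mult2_tp_r[OF M_T2 f g, symmetric])
qed

lemma HP: assumes f: "cfun f" and g: "cfun g"
  shows "ev (P a b) (rs f u) (rs g v) = Dv a (b * u) v f g"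
proof -
  have eq: "mult2 (P a b) (tp u v) = fst (\<Delta> a) (tp (b * u) v)"
    unfolding P_def as2_fst[OF in2s(3) tp_T2] by (simp add: mmul_def t_one_tp)
  show ?thesis unfolding Dv_def eq[symmetric] by (rule ev_mult2_tp_r[OF P_T2 f g, symmetric])
qed

lemma HN: assumes f: "cfun f" and g: "cfun g"
  shows "ev (N a b) (rs f u) (rs g v) = Dv b u v f (ls a g)"
proof -
  have eq: "mult2 (N a b) (tp u v) = fst (one_t a) (fst (\<Delta> b) (tp u v))"
    unfolding N_def as2_fst[OF in2s(4) tp_T2] by (simp add: mmul_def)
  show ?thesis unfolding Dv_def ev_one_t_fst[OF f g, symmetric] eq[symmetric] by (rule ev_mult2_tp_r[OF N_T2 f g, symmetric])
qed

lemma HQ: assumes f: "cfun f" and g: "cfun g"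
  shows "ev (Q a b) (rs f u) (rs g v) = Dv b u v (ls a f) g"
proof -
  have eq: "mult2 (Q a b) (tp u v) = fst (t_one a) (fst (\<Delta> b) (tp u v))"
    unfolding Q_def as2_fst[OF in2s(2) tp_T2] by (simp add: mmul_def)
  show ?thesis unfolding Dv_def ev_t_one_fst[OF f g, symmetric] eq[symmetric] by (rule ev_mult2_tp_r[OF Q_T2 f g, symmetric])
qed

lemma cfun_eps: "cfun \<epsilon>" using cu by (simp add: counit_def)
lemma eps_mult: "\<epsilon> (a * b) = \<epsilon> a * \<epsilon> b" using cu by (simp add: counit_def)

lemma EPS1: "cfun g \<Longrightarrow> ev (M a b) \<epsilon> g = g (a * b)"
  using slice_l_ev[OF M_T2 cfun_eps] cu by (simp add: counit_def M_def)
lemma EPS2: "cfun g \<Longrightarrow> ev (N b a) \<epsilon> g = g (b * a)"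
  using slice_l_ev[OF N_T2 cfun_eps] cu by (simp add: counit_def N_def)
lemma EPS3: "cfun g \<Longrightarrow> ev (P a b) g \<epsilon> = g (a * b)"
  using slice_r_ev[OF P_T2 cfun_eps] cu by (simp add: counit_def P_def)

lemma cfun_phi: "cfun \<phi>" using li by (simp add: left_integral_def)
lemma phi_nz: "\<exists>a. \<phi> a \<noteq> 0" using li by (simp add: left_integral_def)
lemma faith: "(\<And>b. \<phi> (a * b) = 0) \<Longrightarrow> a = 0" using fa unfolding faithful_def by blast

lemma S_bij: "bij S" and S_clin: "clin S" and S_anti: "S (a * b) = S b * S a"
  using an by (auto simp: antipode_def)
lemma ANT: "S (slice_r \<phi> (M a b)) = slice_r \<phi> (N a b)"
  using an by (simp add: antipode_def M_def N_def)

lemma CO: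
  assumes f: "cfun f" and g: "cfun g" and h: "cfun h"
  shows "ev (M b c) (\<lambda>a'. Dv a' u v (ls a f) g) (rs h w) = ev (Q a b) (rs f u) (\<lambda>b'. Dv b' v (c * w) g h)"
proof -
  let ?W = "tp3 u v w"
  let ?\<gamma> = "\<lambda>x y z. f x * g y * h z"
  have "mult_eq T3 (mmul (t_one_one a) (DeltaI \<Delta> (M b c))) (mmul (IDelta \<Delta> (Q a b)) (one_one_t c))"
    using rc unfolding regular_comult_def M_def Q_def by blast
  then have eq: "fst (mmul (t_one_one a) (DeltaI \<Delta> (M b c))) ?W ?\<gamma> = fst (mmul (IDelta \<Delta> (Q a b)) (one_one_t c)) ?W ?\<gamma>"
    unfolding mult_eq_def by simp
  have tr\<gamma>: "tril ?\<gamma>" by (rule tril_prod[OF f g h])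
  have tr\<gamma>': "tril (\<lambda>x y z. f (a * x) * g y * h z)" by (rule tril_prod) (simp_all add: f g h)
  have F: "fst (\<Delta> a') (tp x y) (\<lambda>x' y'. f (a * x') * g y' * h (b' * z)) = Dv a' x y (ls a f) g * h (b' * z)"
    for a' b' x y z
  proof -
    have "fst (\<Delta> a') (tp x y) (\<lambda>x' y'. f (a * x') * g y' * h (b' * z)) = fst (\<Delta> a') (tp x y) (\<lambda>x' y'. f (a * x') * g y') * h (b' * z)"
      by (rule T2_hom_r[OF Lf_T2[OF tp_T2]]) (rule bil_prod, simp_all add: f g)
    then show ?thesis by (simp add: Dv_def ev_def)
  qed
  have trF: "tril (\<lambda>x y z. Dv a' x y (ls a f) g * h (b' * z))" for a' b'
    by (rule tril_I) (simp_all add: cfun_mult_const_r cfun_mult_const cfun_Dv_u cfun_Dv_v f g h)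
  have L1: "fst (mmul (t_one_one a) (DeltaI \<Delta> (M b c))) ?W ?\<gamma> = fst (DeltaI \<Delta> (M b c)) ?W (\<lambda>x y z. f (a * x) * g y * h z)"
    by (simp only: mmul_def t_one_one_def g3_def tr\<gamma> fst_conv if_True)
  have L2: "fst (DeltaI \<Delta> (M b c)) ?W (\<lambda>x y z. f (a * x) * g y * h z) = M b c (\<lambda>a' b'. ?W (\<lambda>x y z. Dv a' x y (ls a f) g * h (b' * z)))"
    by (simp only: DeltaI_def g3_def tr\<gamma>' fst_conv if_True F)
  have L3: "?W (\<lambda>x y z. Dv a' x y (ls a f) g * h (b' * z)) = Dv a' u v (ls a f) g * h (b' * w)" for a' b'
    by (simp only: tp3_def g3_def trF if_True)
  have L: "fst (mmul (t_one_one a) (DeltaI \<Delta> (M b c))) ?W ?\<gamma> = ev (M b c) (\<lambda>a'. Dv a' u v (ls a f) g) (rs h w)"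
    unfolding L1 L2 L3 ev_def rs_def ..
  have G: "fst (\<Delta> b') (tp y z) (\<lambda>y' z'. f (a' * x) * g y' * h z') = f (a' * x) * Dv b' y z g h"
    for a' b' x y z
  proof -
    have "fst (\<Delta> b') (tp y z) (\<lambda>y' z'. f (a' * x) * g y' * h z') = fst (\<Delta> b') (tp y z) (\<lambda>y' z'. f (a' * x) * (g y' * h z'))"
      by (simp only: mult.assoc)
    also have "\<dots> = f (a' * x) * fst (\<Delta> b') (tp y z) (\<lambda>y' z'. g y' * h z')"
      by (rule T2_hom_l[OF Lf_T2[OF tp_T2]]) (rule bil_prod[OF g h])
    finally show ?thesis by (simp add: Dv_def ev_def)
  qed
  have trG: "tril (\<lambda>x y z. f (a' * x) * Dv b' y z g h)" for a' b'
    by (rule tril_I) (simp_all add: cfun_mult_const_r cfun_mult_const cfun_Dv_u cfun_Dv_v f g h)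
  have R1: "fst (mmul (IDelta \<Delta> (Q a b)) (one_one_t c)) ?W ?\<gamma> = Q a b (\<lambda>a' b'. tp3 u v (c * w) (\<lambda>x y z. f (a' * x) * Dv b' y z g h))"
    by (simp only: mmul_def fst_conv one_one_t_tp3 IDelta_def g3_def tr\<gamma> if_True G)
  have R2: "tp3 u v (c * w) (\<lambda>x y z. f (a' * x) * Dv b' y z g h) = f (a' * u) * Dv b' v (c * w) g h" for a' b'
    by (simp only: tp3_def g3_def trG if_True)
  have R: "fst (mmul (IDelta \<Delta> (Q a b)) (one_one_t c)) ?W ?\<gamma> = ev (Q a b) (rs f u) (\<lambda>b'. Dv b' v (c * w) g h)"
    unfolding R1 R2 ev_def rs_def ..
  show ?thesis using eq L R by simp
qed

end


lemma rep2_comp1: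
  fixes B :: "('a::calg \<Rightarrow> complex) \<Rightarrow> ('a \<Rightarrow> complex) \<Rightarrow> complex"
  assumes B: "rep2 B" and c: "\<And>G. cfun G \<Longrightarrow> cfun (\<lambda>m. K m G)"
    and l: "\<And>m. \<exists>s. \<forall>G. cfun G \<longrightarrow> K m G = G s"
  shows "rep2 (\<lambda>G H. B (\<lambda>m. K m G) H)"
proof -
  obtain t where t: "\<And>m G. cfun G \<Longrightarrow> K m G = G (t m)" using l by metis
  obtain n a b where 1: "\<And>F G. cfun F \<Longrightarrow> cfun G \<Longrightarrow> B F G = (\<Sum>i<(n::nat). F (a i) * G (b i))"
    using B unfolding rep2_def by blast
  have ct: "cfun (\<lambda>m. G (t m))" if "cfun G" for G
  proof -
    have "(\<lambda>m. K m G) = (\<lambda>m. G (t m))" using t[OF that] by (rule ext)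
    then show ?thesis using c[OF that] by simp
  qed
  show ?thesis
    by (rule rep2_I[of "{..<n}" _ "\<lambda>i. t (a i)" b]) (simp_all add: 1 ct t)
qed

lemma rep2_comp2:
  fixes B :: "('a::calg \<Rightarrow> complex) \<Rightarrow> ('a \<Rightarrow> complex) \<Rightarrow> complex"
  assumes B: "rep2 B" and c: "\<And>H. cfun H \<Longrightarrow> cfun (\<lambda>m. K m H)"
    and l: "\<And>m. \<exists>s. \<forall>H. cfun H \<longrightarrow> K m H = H s"
  shows "rep2 (\<lambda>G H. B G (\<lambda>m. K m H))"
proof -
  obtain t where t: "\<And>m H. cfun H \<Longrightarrow> K m H = H (t m)" using l by metis
  obtain n a b where 1: "\<And>F G. cfun F \<Longrightarrow> cfun G \<Longrightarrow> B F G = (\<Sum>i<(n::nat). F (a i) * G (b i))"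
    using B unfolding rep2_def by blast
  have ct: "cfun (\<lambda>m. H (t m))" if "cfun H" for H
  proof -
    have "(\<lambda>m. K m H) = (\<lambda>m. H (t m))" using t[OF that] by (rule ext)
    then show ?thesis using c[OF that] by simp
  qed
  show ?thesis
    by (rule rep2_I[of "{..<n}" _ a "\<lambda>i. t (b i)"]) (simp_all add: 1 ct t)
qed

lemma rep2_comp_in2:
  fixes B :: "('a::calg \<Rightarrow> complex) \<Rightarrow> ('a \<Rightarrow> complex) \<Rightarrow> complex"
  assumes B: "rep2 B" and F0: "cfun F0" and K: "\<And>m. rep2 (K m)"
    and c: "\<And>G H. cfun G \<Longrightarrow> cfun H \<Longrightarrow> cfun (\<lambda>m. K m G H)"
  shows "rep2 (\<lambda>G H. B F0 (\<lambda>m. K m G H))"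
proof -
  obtain n a b where 1: "\<And>F G. cfun F \<Longrightarrow> cfun G \<Longrightarrow> B F G = (\<Sum>i<(n::nat). F (a i) * G (b i))"
    using B unfolding rep2_def by blast
  have "rep2 (\<lambda>G H. \<Sum>i<n. F0 (a i) * K (b i) G H)"
    by (rule rep2_sum) (auto intro: rep2_scale K)
  then show ?thesis by (rule rep2_cong) (simp add: 1 F0 c)
qed

lemma rep2_comp_in1:
  fixes B :: "('a::calg \<Rightarrow> complex) \<Rightarrow> ('a \<Rightarrow> complex) \<Rightarrow> complex"
  assumes B: "rep2 B" and H0: "cfun H0" and K: "\<And>m. rep2 (K m)"
    and c: "\<And>G H. cfun G \<Longrightarrow> cfun H \<Longrightarrow> cfun (\<lambda>m. K m G H)"
  shows "rep2 (\<lambda>G H. B (\<lambda>m. K m G H) H0)"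
proof -
  obtain n a b where 1: "\<And>F G. cfun F \<Longrightarrow> cfun G \<Longrightarrow> B F G = (\<Sum>i<(n::nat). F (a i) * G (b i))"
    using B unfolding rep2_def by blast
  have "rep2 (\<lambda>G H. \<Sum>i<n. H0 (b i) * K (a i) G H)"
    by (rule rep2_sum) (auto intro: rep2_scale K)
  then show ?thesis by (rule rep2_cong) (simp add: 1 H0 c mult.commute)
qed

context aqh begin

lemma A1: assumes F: "cfun F" and G: "cfun G"
  shows "ev (M a b) F (rs G c) = ev (M a (b * c)) F G"
proof (rule ND_RR_eq[OF nd rep2_rs2[OF rep2_M] rep2_M _ F G])
  fix f g :: "'a \<Rightarrow> complex" and u v assume f: "cfun f" and g: "cfun g"
  show "ev (M a b) (rs f u) (rs (rs g v) c) = ev (M a (b * c)) (rs f u) (rs g v)"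
    by (simp only: rs_rs HM[OF f g] mult.assoc)
qed

lemma A3: assumes F: "cfun F" and G: "cfun G"
  shows "ev (M a b) (rs F d) G = ev (P a d) F (rs G b)"
proof (rule ND_RR_eq[OF nd rep2_rs1[OF rep2_M] rep2_rs2[OF rep2_P] _ F G])
  fix f g :: "'a \<Rightarrow> complex" and u v assume f: "cfun f" and g: "cfun g"
  show "ev (M a b) (rs (rs f u) d) (rs g v) = ev (P a d) (rs f u) (rs (rs g v) b)"
    by (simp only: rs_rs HM[OF f g] HP[OF f g])
qed

lemma MD: assumes F: "cfun F" and G: "cfun G"
  shows "ev (M q b) (rs F v) G = Dv q v b F G"
proof (rule ND_R2_eq[OF nd rep2_rs1[OF rep2_M] rep2_Dv _ F G])
  fix F G :: "'a \<Rightarrow> complex" and w assume F: "cfun F" and G: "cfun G"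
  show "ev (M q b) (rs F v) (rs G w) = Dv q v b F (rs G w)"
    by (simp only: HM[OF F G] DvS2[OF F G])
qed

lemma PD: assumes F: "cfun F" and G: "cfun G"
  shows "ev (P a u) F (rs G q) = Dv a u q F G"
proof (rule ND_R1_eq[OF nd rep2_rs2[OF rep2_P] rep2_Dv _ F G])
  fix F G :: "'a \<Rightarrow> complex" and w assume F: "cfun F" and G: "cfun G"
  show "ev (P a u) (rs F w) (rs G q) = Dv a u q (rs F w) G"
    by (simp only: HP[OF F G] DvS1[OF F G])
qed

lemma NQ: assumes F: "cfun F" and G: "cfun G"
  shows "ev (N \<beta> b) (ls x F) G = ev (Q x b) F (ls \<beta> G)"
proof (rule ND_RR_eq[OF nd rep2_ls1[OF rep2_N] rep2_ls2[OF rep2_Q] _ F G])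
  fix f g :: "'a \<Rightarrow> complex" and u v assume f: "cfun f" and g: "cfun g"
  show "ev (N \<beta> b) (ls x (rs f u)) (rs g v) = ev (Q x b) (rs f u) (ls \<beta> (rs g v))"
    by (simp only: ls_rs HN[OF cfun_ls[OF f] g] HQ[OF f cfun_ls[OF g]])
qed

lemma QP: assumes F: "cfun F" and K: "cfun K"
  shows "ev (Q x a) (rs F u) K = ev (P a u) (ls x F) K"
proof (rule ND_R2_eq[OF nd rep2_rs1[OF rep2_Q] rep2_ls1[OF rep2_P] _ F K])
  fix F k :: "'a \<Rightarrow> complex" and v assume F: "cfun F" and k: "cfun k"
  show "ev (Q x a) (rs F u) (rs k v) = ev (P a u) (ls x F) (rs k v)"
    by (simp only: HQ[OF F k] PD[OF cfun_ls[OF F] k])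
qed

lemma NM: assumes F: "cfun F" and G: "cfun G"
  shows "ev (N a b) F (rs G c) = ev (M b c) F (ls a G)"
proof (rule ND_RR_eq[OF nd rep2_rs2[OF rep2_N] rep2_ls2[OF rep2_M] _ F G])
  fix f g :: "'a \<Rightarrow> complex" and u v assume f: "cfun f" and g: "cfun g"
  show "ev (N a b) (rs f u) (rs (rs g v) c) = ev (M b c) (rs f u) (ls a (rs g v))"
    by (simp only: rs_rs ls_rs HN[OF f g] HM[OF f cfun_ls[OF g]])
qed

lemma N_add2: assumes F: "cfun F" and G: "cfun G"
  shows "ev (N a (q1 + q2)) F G = ev (N a q1) F G + ev (N a q2) F G"
proof (rule ND_RR_eq[OF nd rep2_N rep2_add[OF rep2_N rep2_N] _ F G])
  fix f g :: "'a \<Rightarrow> complex" and u v assume f: "cfun f" and g: "cfun g"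
  show "ev (N a (q1 + q2)) (rs f u) (rs g v) = ev (N a q1) (rs f u) (rs g v) + ev (N a q2) (rs f u) (rs g v)"
    by (simp only: HN[OF f g] Dv_add_a)
qed

lemma N_scale2: assumes F: "cfun F" and G: "cfun G"
  shows "ev (N a (cscale c q)) F G = c * ev (N a q) F G"
proof (rule ND_RR_eq[OF nd rep2_N rep2_scale[OF rep2_N] _ F G])
  fix f g :: "'a \<Rightarrow> complex" and u v assume f: "cfun f" and g: "cfun g"
  show "ev (N a (cscale c q)) (rs f u) (rs g v) = c * ev (N a q) (rs f u) (rs g v)"
    by (simp only: HN[OF f g] Dv_scale_a)
qed

lemma cfun_N2: "cfun F \<Longrightarrow> cfun G \<Longrightarrow> cfun (\<lambda>q. ev (N a q) F G)"
  using N_add2 N_scale2 unfolding cfun_def[of "\<lambda>q. ev (N a q) F G"] by blast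

lemma N_add1: assumes F: "cfun F" and G: "cfun G"
  shows "ev (N (a1 + a2) b) F G = ev (N a1 b) F G + ev (N a2 b) F G"
proof (rule ND_RR_eq[OF nd rep2_N rep2_add[OF rep2_N rep2_N] _ F G])
  fix f g :: "'a \<Rightarrow> complex" and u v assume f: "cfun f" and g: "cfun g"
  have "Dv b u v f (\<lambda>x. ls a1 g x + ls a2 g x) = Dv b u v f (ls a1 g) + Dv b u v f (ls a2 g)"
    by (rule rep2_lin2[OF rep2_Dv]) (simp_all add: f g)
  then show "ev (N (a1 + a2) b) (rs f u) (rs g v) = ev (N a1 b) (rs f u) (rs g v) + ev (N a2 b) (rs f u) (rs g v)"
    by (simp only: HN[OF f g] ls_add[OF g])
qed

lemma N_scale1: assumes F: "cfun F" and G: "cfun G"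
  shows "ev (N (cscale c a) b) F G = c * ev (N a b) F G"
proof (rule ND_RR_eq[OF nd rep2_N rep2_scale[OF rep2_N] _ F G])
  fix f g :: "'a \<Rightarrow> complex" and u v assume f: "cfun f" and g: "cfun g"
  have "Dv b u v f (\<lambda>x. c * ls a g x) = c * Dv b u v f (ls a g)"
    by (rule rep2_hom2[OF rep2_Dv]) (simp_all add: f g)
  then show "ev (N (cscale c a) b) (rs f u) (rs g v) = c * ev (N a b) (rs f u) (rs g v)"
    by (simp only: HN[OF f g] ls_scale[OF g])
qed

lemma cfun_N1: "cfun F \<Longrightarrow> cfun G \<Longrightarrow> cfun (\<lambda>a. ev (N a b) F G)"
  using N_add1 N_scale1 unfolding cfun_def[of "\<lambda>a. ev (N a b) F G"] by blast

lemma Dv_lin2: "cfun F \<Longrightarrow> \<exists>s. \<forall>G. cfun G \<longrightarrow> Dv m u v F G = G s"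
  using rep2_sl2[OF rep2_Dv] by blast
lemma Dv_lin1: "cfun G \<Longrightarrow> \<exists>s. \<forall>F. cfun F \<longrightarrow> Dv m u v F G = F s"
  using rep2_sl1[OF rep2_Dv] by blast

lemma C2: assumes f: "cfun f" and G: "cfun G" and H: "cfun H"
  shows "ev (M b c) (\<lambda>m. Dv m u v (ls x f) G) H = ev (Q x b) (rs f u) (\<lambda>b'. Dv b' v c G H)"
proof (rule ND_R2_eq[OF nd _ _ _ G H])
  show "rep2 (\<lambda>G H. ev (M b c) (\<lambda>m. Dv m u v (ls x f) G) H)"
    by (rule rep2_comp1[OF rep2_M]) (simp_all add: cfun_Dv_a Dv_lin2 f)
  show "rep2 (\<lambda>G H. ev (Q x b) (rs f u) (\<lambda>b'. Dv b' v c G H))"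
    by (rule rep2_comp_in2[OF rep2_Q]) (simp_all add: rep2_Dv cfun_Dv_a f)
  fix G h :: "'a \<Rightarrow> complex" and w assume G: "cfun G" and h: "cfun h"
  show "ev (M b c) (\<lambda>m. Dv m u v (ls x f) G) (rs h w) = ev (Q x b) (rs f u) (\<lambda>b'. Dv b' v c G (rs h w))"
    by (simp only: CO[OF f G h] DvS2[OF G h])
qed

lemma C1: assumes F: "cfun F" and G: "cfun G" and h: "cfun h"
  shows "ev (M a c) (\<lambda>m. Dv m u v F G) h = ev (P a u) F (\<lambda>q. Dv q v c G h)"
proof (rule ND_L1_eq[OF nd _ _ _ F h])
  show "rep2 (\<lambda>F H. ev (M a c) (\<lambda>m. Dv m u v F G) H)"
    by (rule rep2_comp1[OF rep2_M]) (simp_all add: cfun_Dv_a Dv_lin1 G)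
  show "rep2 (\<lambda>F H. ev (P a u) F (\<lambda>q. Dv q v c G H))"
    by (rule rep2_comp2[OF rep2_P]) (simp_all add: cfun_Dv_a Dv_lin2 G)
  fix f H :: "'a \<Rightarrow> complex" and x assume f: "cfun f" and H: "cfun H"
  show "ev (M a c) (\<lambda>m. Dv m u v (ls x f) G) H = ev (P a u) (ls x f) (\<lambda>q. Dv q v c G H)"
    by (simp only: C2[OF f G H] QP[OF f cfun_Dv_a])
qed

end


lemma rep2_flipS:
  fixes B :: "('a::calg \<Rightarrow> complex) \<Rightarrow> ('a \<Rightarrow> complex) \<Rightarrow> complex"
  assumes B: "rep2 B" and S: "clin S"
  shows "rep2 (\<lambda>f g. B (\<lambda>z. g (S z)) (\<lambda>z. f (S z)))"
proof -
  obtain n a b where 1: "\<And>F G. cfun F \<Longrightarrow> cfun G \<Longrightarrow> B F G = (\<Sum>i<(n::nat). F (a i) * G (b i))"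
    using B unfolding rep2_def by blast
  show ?thesis
    by (rule rep2_I[of "{..<n}" _ "\<lambda>i. S (b i)" "\<lambda>i. S (a i)"]) (simp_all add: 1 cfun_comp S mult.commute)
qed

context aqh begin

lemma CI':
  assumes f: "cfun f" and X: "cfun X" and h: "cfun h"
  shows "ev (N a b) (\<lambda>m. Dv m u v (ls x1 f) X) h = ev (Q x1 b) (rs f u) (\<lambda>q. ev (N a q) (rs X v) h)"
proof (rule ND_R2_eq[OF nd _ _ _ X h])
  show "rep2 (\<lambda>X H. ev (N a b) (\<lambda>m. Dv m u v (ls x1 f) X) H)"
    by (rule rep2_comp1[OF rep2_N]) (simp_all add: cfun_Dv_a Dv_lin2 f)
  show "rep2 (\<lambda>X H. ev (Q x1 b) (rs f u) (\<lambda>q. ev (N a q) (rs X v) H))"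
    by (rule rep2_comp_in2[OF rep2_Q]) (simp_all add: rep2_rs1[OF rep2_N] cfun_N2 f)
  fix X k :: "'a \<Rightarrow> complex" and c assume X: "cfun X" and k: "cfun k"
  show "ev (N a b) (\<lambda>m. Dv m u v (ls x1 f) X) (rs k c) = ev (Q x1 b) (rs f u) (\<lambda>q. ev (N a q) (rs X v) (rs k c))"
    by (simp only: NM[OF cfun_Dv_a k] C2[OF f X cfun_ls[OF k]] NM[OF cfun_rs[OF X] k] MD[OF X cfun_ls[OF k]])
qed

lemma CI:
  assumes f: "cfun f" and g: "cfun g" and h: "cfun h"
  shows "ev (N a b) (\<lambda>m. Ev m x1 x2 f g) h = ev (Q x1 b) f (\<lambda>q. ev (N a q) (ls x2 g) h)"
proof (rule ND_RR_eq[OF nd _ _ _ f g])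
  show "rep2 (\<lambda>f g. ev (N a b) (\<lambda>m. Ev m x1 x2 f g) h)"
    by (rule rep2_comp_in1[OF rep2_N h]) (simp_all add: rep2_Ev cfun_Ev_a)
  have lin: "\<exists>s. \<forall>g. cfun g \<longrightarrow> ev (N a q) (ls x2 g) h = g s" for q
    using slice_r_ev[OF N_T2 h cfun_ls] by auto
  show "rep2 (\<lambda>f g. ev (Q x1 b) f (\<lambda>q. ev (N a q) (ls x2 g) h))"
    by (rule rep2_comp2[OF rep2_Q]) (simp_all add: cfun_N2 h lin)
  fix f g :: "'a \<Rightarrow> complex" and u v assume f: "cfun f" and g: "cfun g"
  show "ev (N a b) (\<lambda>m. Ev m x1 x2 (rs f u) (rs g v)) h = ev (Q x1 b) (rs f u) (\<lambda>q. ev (N a q) (ls x2 (rs g v)) h)"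
    by (simp only: DE[OF f g, symmetric] CI'[OF f cfun_ls[OF g] h] ls_rs)
qed

lemma C3:
  assumes f: "cfun f" and G: "cfun G" and h: "cfun h"
  shows "ev (Q x b) f (\<lambda>q. Dv a u q G h) = ev (P a u) G (\<lambda>\<beta>. ev (N \<beta> b) (ls x f) h)"
proof -
  obtain n p q where Qt: "Q x b = tsum {..<(n::nat)} p q" using T2_tsum[OF Q_T2] by blast
  obtain m al be where Pt: "P a u = tsum {..<(m::nat)} al be" using T2_tsum[OF P_T2] by blast
  have "ev (Q x b) f (\<lambda>q. Dv a u q G h) = (\<Sum>j<n. f (p j) * Dv a u (q j) G h)"
    by (simp add: Qt ev_tsum f cfun_Dv_v G h)
  also have "\<dots> = (\<Sum>j<n. f (p j) * ev (P a u) G (rs h (q j)))"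
    by (simp only: PD[OF G h])
  also have "\<dots> = (\<Sum>j<n. \<Sum>k<m. f (p j) * (G (al k) * h (be k * q j)))"
    by (simp add: Pt ev_tsum G h sum_distrib_left)
  also have "\<dots> = (\<Sum>k<m. \<Sum>j<n. f (p j) * (G (al k) * h (be k * q j)))"
    by (rule sum.swap)
  also have "\<dots> = (\<Sum>k<m. G (al k) * (\<Sum>j<n. f (p j) * h (be k * q j)))"
    by (simp only: sum_distrib_left mult.left_commute)
  also have "\<dots> = (\<Sum>k<m. G (al k) * ev (Q x b) f (ls (be k) h))"
    by (simp add: Qt ev_tsum f h)
  also have "\<dots> = (\<Sum>k<m. G (al k) * ev (N (be k) b) (ls x f) h)"
    by (simp only: NQ[OF f h])
  also have "\<dots> = ev (P a u) G (\<lambda>\<beta>. ev (N \<beta> b) (ls x f) h)"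
    by (simp add: Pt ev_tsum G cfun_N1 f h)
  finally show ?thesis .
qed

definition R where "R a b = slice_r \<phi> (M a b)"
definition L where "L a b = slice_r \<phi> (N a b)"

lemma SL: "S (L a b) = S (S (R a b))" by (simp add: R_def L_def ANT)

lemma S_inv: "S (inv S x) = x" using S_bij by (simp add: bij_is_surj surj_f_inv_f)
lemma inv_S: "inv S (S x) = x" using S_bij by (simp add: bij_is_inj)

lemma G2_elem:
  assumes f: "cfun f" and g: "cfun g"
  shows "Ev (L a b) x1 x2 f g = Dv (R a b) (inv S x2) (inv S x1) (\<lambda>z. g (S z)) (\<lambda>z. f (S z))"
proof -
  define u where "u = inv S x2"
  define v where "v = inv S x1"
  have gS: "cfun (\<lambda>z. g (S z))" by (rule cfun_comp[OF g S_clin])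
  have fS: "cfun (\<lambda>z. f (S z))" by (rule cfun_comp[OF f S_clin])
  have in1: "ev (N a q) (ls x2 g) \<phi> = Dv a u q (\<lambda>z. g (S z)) \<phi>" for q
  proof -
    have "ev (N a q) (ls x2 g) \<phi> = g (x2 * L a q)"
      using slice_r_ev[OF N_T2 cfun_phi cfun_ls[OF g]] by (simp add: L_def)
    also have "\<dots> = g (S (R a q * u))" by (simp add: S_anti u_def S_inv L_def R_def ANT)
    also have "\<dots> = ev (M a q) (rs (\<lambda>z. g (S z)) u) \<phi>"
      using slice_r_ev[OF M_T2 cfun_phi cfun_rs[OF gS]] by (simp add: R_def)
    also have "\<dots> = Dv a u q (\<lambda>z. g (S z)) \<phi>" by (rule MD[OF gS cfun_phi])
    finally show ?thesis .
  qed
  have in2: "Dv q v b (\<lambda>z. f (S z)) \<phi> = ev (N q b) (ls x1 f) \<phi>" for q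
  proof -
    have "Dv q v b (\<lambda>z. f (S z)) \<phi> = ev (M q b) (rs (\<lambda>z. f (S z)) v) \<phi>" by (rule MD[OF fS cfun_phi, symmetric])
    also have "\<dots> = f (S (R q b * v))"
      using slice_r_ev[OF M_T2 cfun_phi cfun_rs[OF fS]] by (simp add: R_def)
    also have "\<dots> = f (x1 * L q b)" by (simp add: S_anti v_def S_inv L_def R_def ANT)
    also have "\<dots> = ev (N q b) (ls x1 f) \<phi>"
      using slice_r_ev[OF N_T2 cfun_phi cfun_ls[OF f]] by (simp add: L_def)
    finally show ?thesis .
  qed
  have "Ev (L a b) x1 x2 f g = ev (N a b) (\<lambda>m. Ev m x1 x2 f g) \<phi>"
    unfolding L_def by (rule slice_r_ev[OF N_T2 cfun_phi cfun_Ev_a, symmetric])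
  also have "\<dots> = ev (Q x1 b) f (\<lambda>q. ev (N a q) (ls x2 g) \<phi>)" by (rule CI[OF f g cfun_phi])
  also have "\<dots> = ev (Q x1 b) f (\<lambda>q. Dv a u q (\<lambda>z. g (S z)) \<phi>)" by (simp only: in1)
  also have "\<dots> = ev (P a u) (\<lambda>z. g (S z)) (\<lambda>\<beta>. ev (N \<beta> b) (ls x1 f) \<phi>)" by (rule C3[OF f gS cfun_phi])
  also have "\<dots> = ev (P a u) (\<lambda>z. g (S z)) (\<lambda>q. Dv q v b (\<lambda>z. f (S z)) \<phi>)" by (simp only: in2)
  also have "\<dots> = ev (M a b) (\<lambda>m. Dv m u v (\<lambda>z. g (S z)) (\<lambda>z. f (S z))) \<phi>"
    by (rule C1[OF gS fS cfun_phi, symmetric])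
  also have "\<dots> = Dv (R a b) u v (\<lambda>z. g (S z)) (\<lambda>z. f (S z))"
    unfolding R_def by (rule slice_r_ev[OF M_T2 cfun_phi cfun_Dv_a])
  finally show ?thesis by (simp add: u_def v_def)
qed

lemma SLem1: "(\<lambda>z. g (S z * d)) = ls (inv S d) (\<lambda>z. g (S z))"
  by (rule ext) (simp add: S_anti S_inv)
lemma SLem2: "(\<lambda>z. g (x * S z)) = rs (\<lambda>z. g (S z)) (inv S x)"
  by (rule ext) (simp add: S_anti S_inv)

lemma G1_elem:
  assumes f: "cfun f" and g: "cfun g"
  shows "Dv (L a b) c d f g = Ev (R a b) (inv S d) (inv S c) (\<lambda>z. g (S z)) (\<lambda>z. f (S z))"
proof (rule ND_LL_eq[OF nd rep2_Dv rep2_flipS[OF rep2_Ev S_clin] _ f g])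
  fix f g :: "'a \<Rightarrow> complex" and x1 x2 assume f: "cfun f" and g: "cfun g"
  have gS: "cfun (\<lambda>z. g (S z))" by (rule cfun_comp[OF g S_clin])
  have fS: "cfun (\<lambda>z. f (S z))" by (rule cfun_comp[OF f S_clin])
  have "Dv (L a b) c d (ls x1 f) (ls x2 g) = Ev (L a b) x1 x2 (rs f c) (rs g d)" by (rule DE[OF f g])
  also have "\<dots> = Dv (R a b) (inv S x2) (inv S x1) (\<lambda>z. g (S z * d)) (\<lambda>z. f (S z * c))"
    using G2_elem[OF cfun_rs[OF f] cfun_rs[OF g]] by simp
  also have "\<dots> = Dv (R a b) (inv S x2) (inv S x1) (ls (inv S d) (\<lambda>z. g (S z))) (ls (inv S c) (\<lambda>z. f (S z)))"
    by (simp only: SLem1)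
  also have "\<dots> = Ev (R a b) (inv S d) (inv S c) (rs (\<lambda>z. g (S z)) (inv S x2)) (rs (\<lambda>z. f (S z)) (inv S x1))"
    by (rule DE[OF gS fS])
  also have "\<dots> = Ev (R a b) (inv S d) (inv S c) (\<lambda>z. g (x2 * S z)) (\<lambda>z. f (x1 * S z))"
    by (simp only: SLem2)
  finally show "Dv (L a b) c d (ls x1 f) (ls x2 g) = Ev (R a b) (inv S d) (inv S c) (\<lambda>z. ls x2 g (S z)) (\<lambda>z. ls x1 f (S z))"
    by simp
qed

end


context aqh begin

lemma Lf_sum:
  assumes I: "finite I" and F: "cfun F" and G: "cfun G"
  shows "ev (fst (\<Delta> a) (tsum I c d)) F G = (\<Sum>i\<in>I. Dv a (c i) (d i) F G)"
proof (rule ND_LL_eq[OF nd rep2_ev[OF Lf_T2[OF tsum_T2[OF I]]] rep2_sum[OF I rep2_Dv] _ F G])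
  fix f g :: "'a \<Rightarrow> complex" and x1 x2 assume f: "cfun f" and g: "cfun g"
  have "ev (fst (\<Delta> a) (tsum I c d)) (ls x1 f) (ls x2 g) = ev (mult2 (tp x1 x2) (fst (\<Delta> a) (tsum I c d))) f g"
    by (rule ev_mult2_tp_l[OF Lf_T2[OF tsum_T2[OF I]] f g, symmetric])
  also have "\<dots> = ev (mult2 (snd (\<Delta> a) (tp x1 x2)) (tsum I c d)) f g"
    by (simp only: compat[OF tp_T2 tsum_T2[OF I]])
  also have "\<dots> = (\<Sum>i\<in>I. Ev a x1 x2 (rs f (c i)) (rs g (d i)))"
    unfolding Ev_def by (rule ev_mult2_r[OF Rg_T2[OF tp_T2] f g I])
  also have "\<dots> = (\<Sum>i\<in>I. Dv a (c i) (d i) (ls x1 f) (ls x2 g))"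
    by (simp only: DE[OF f g])
  finally show "ev (fst (\<Delta> a) (tsum I c d)) (ls x1 f) (ls x2 g) = (\<Sum>i\<in>I. Dv a (c i) (d i) (ls x1 f) (ls x2 g))" .
qed

lemma Rg_sum:
  assumes I: "finite I" and F: "cfun F" and G: "cfun G"
  shows "ev (snd (\<Delta> a) (tsum I c d)) F G = (\<Sum>i\<in>I. Ev a (c i) (d i) F G)"
proof (rule ND_RR_eq[OF nd rep2_ev[OF Rg_T2[OF tsum_T2[OF I]]] rep2_sum[OF I rep2_Ev] _ F G])
  fix f g :: "'a \<Rightarrow> complex" and u v assume f: "cfun f" and g: "cfun g"
  have "ev (snd (\<Delta> a) (tsum I c d)) (rs f u) (rs g v) = ev (mult2 (snd (\<Delta> a) (tsum I c d)) (tp u v)) f g"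
    by (rule ev_mult2_tp_r[OF Rg_T2[OF tsum_T2[OF I]] f g, symmetric])
  also have "\<dots> = ev (mult2 (tsum I c d) (fst (\<Delta> a) (tp u v))) f g"
    by (simp only: compat[OF tsum_T2[OF I] tp_T2])
  also have "\<dots> = (\<Sum>i\<in>I. Dv a u v (ls (c i) f) (ls (d i) g))"
    unfolding Dv_def by (rule ev_mult2_l[OF Lf_T2[OF tp_T2] f g I])
  also have "\<dots> = (\<Sum>i\<in>I. Ev a (c i) (d i) (rs f u) (rs g v))"
    by (simp only: DE[OF f g])
  finally show "ev (snd (\<Delta> a) (tsum I c d)) (rs f u) (rs g v) = (\<Sum>i\<in>I. Ev a (c i) (d i) (rs f u) (rs g v))" .
qed

lemma Sinv_clin: "clin (inv S)" by (rule clin_inv[OF S_bij S_clin])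

lemma elem_ok: "mult_eq T2 (\<Delta> (L a b)) (flipSS_M S (\<Delta> (R a b)))"
  unfolding mult_eq_def flipSS_M_def fst_conv snd_conv
proof (intro conjI ballI)
  fix y :: "'a t2" assume y: "y \<in> T2"
  obtain n c d where yt: "y = tsum {..<(n::nat)} c d" using T2_tsum[OF y] by blast
  have fl: "flipSS (inv S) y = tsum {..<n} (\<lambda>i. inv S (d i)) (\<lambda>i. inv S (c i))"
    by (simp add: yt flipSS_tsum[OF Sinv_clin])
  show "fst (\<Delta> (L a b)) y = flipSS S (snd (\<Delta> (R a b)) (flipSS (inv S) y))"
  proof (rule ext2[OF Lf_T2[OF y] flipSS_T2[OF Rg_T2 S_clin]])
    show "flipSS (inv S) y \<in> T2" by (rule flipSS_T2[OF y Sinv_clin])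
    fix f g :: "'a \<Rightarrow> complex" assume f: "cfun f" and g: "cfun g"
    have gS: "cfun (\<lambda>z. g (S z))" by (rule cfun_comp[OF g S_clin])
    have fS: "cfun (\<lambda>z. f (S z))" by (rule cfun_comp[OF f S_clin])
    have "ev (fst (\<Delta> (L a b)) y) f g = (\<Sum>i<n. Dv (L a b) (c i) (d i) f g)"
      unfolding yt by (rule Lf_sum[OF _ f g]) simp
    also have "\<dots> = (\<Sum>i<n. Ev (R a b) (inv S (d i)) (inv S (c i)) (\<lambda>z. g (S z)) (\<lambda>z. f (S z)))"
      by (simp only: G1_elem[OF f g])
    also have "\<dots> = ev (snd (\<Delta> (R a b)) (flipSS (inv S) y)) (\<lambda>z. g (S z)) (\<lambda>z. f (S z))"
      unfolding fl by (rule Rg_sum[OF _ gS fS, symmetric]) simp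
    also have "\<dots> = ev (flipSS S (snd (\<Delta> (R a b)) (flipSS (inv S) y))) f g"
      by (rule ev_flipSS[OF f g, symmetric])
    finally show "ev (fst (\<Delta> (L a b)) y) f g = ev (flipSS S (snd (\<Delta> (R a b)) (flipSS (inv S) y))) f g" .
  qed
next
  fix y :: "'a t2" assume y: "y \<in> T2"
  obtain n c d where yt: "y = tsum {..<(n::nat)} c d" using T2_tsum[OF y] by blast
  have fl: "flipSS (inv S) y = tsum {..<n} (\<lambda>i. inv S (d i)) (\<lambda>i. inv S (c i))"
    by (simp add: yt flipSS_tsum[OF Sinv_clin])
  show "snd (\<Delta> (L a b)) y = flipSS S (fst (\<Delta> (R a b)) (flipSS (inv S) y))"
  proof (rule ext2[OF Rg_T2[OF y] flipSS_T2[OF Lf_T2 S_clin]])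
    show "flipSS (inv S) y \<in> T2" by (rule flipSS_T2[OF y Sinv_clin])
    fix f g :: "'a \<Rightarrow> complex" assume f: "cfun f" and g: "cfun g"
    have gS: "cfun (\<lambda>z. g (S z))" by (rule cfun_comp[OF g S_clin])
    have fS: "cfun (\<lambda>z. f (S z))" by (rule cfun_comp[OF f S_clin])
    have "ev (snd (\<Delta> (L a b)) y) f g = (\<Sum>i<n. Ev (L a b) (c i) (d i) f g)"
      unfolding yt by (rule Rg_sum[OF _ f g]) simp
    also have "\<dots> = (\<Sum>i<n. Dv (R a b) (inv S (d i)) (inv S (c i)) (\<lambda>z. g (S z)) (\<lambda>z. f (S z)))"
      by (simp only: G2_elem[OF f g])
    also have "\<dots> = ev (fst (\<Delta> (R a b)) (flipSS (inv S) y)) (\<lambda>z. g (S z)) (\<lambda>z. f (S z))"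
      unfolding fl by (rule Lf_sum[OF _ gS fS, symmetric]) simp
    also have "\<dots> = ev (flipSS S (fst (\<Delta> (R a b)) (flipSS (inv S) y))) f g"
      by (rule ev_flipSS[OF f g, symmetric])
    finally show "ev (snd (\<Delta> (L a b)) y) f g = ev (flipSS S (fst (\<Delta> (R a b)) (flipSS (inv S) y))) f g" .
  qed
qed

lemma ev_zero1: "Z \<in> T2 \<Longrightarrow> cfun g \<Longrightarrow> ev Z (\<lambda>_. 0) g = 0"
  by (auto dest!: T2_tsum simp: ev_tsum cfun_def)

lemma eps_nz: "\<exists>b. \<epsilon> b \<noteq> 0"
proof (rule ccontr)
  assume "\<not> (\<exists>b. \<epsilon> b \<noteq> 0)"
  then have e0: "\<epsilon> = (\<lambda>_. 0)" by auto
  have ab: "a * b = 0" for a b :: 'a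
  proof (rule sep0)
    fix g :: "'a \<Rightarrow> complex" assume g: "cfun g"
    have "ev (M a b) \<epsilon> g = 0" using ev_zero1[OF M_T2 g] e0 by simp
    then show "g (a * b) = 0" using EPS1[OF g] by simp
  qed
  then have "a = 0" for a :: 'a using nd_r[OF nd] by blast
  then show False using phi_nz cfun_zero[OF cfun_phi] by metis
qed

definition GG where "GG = {y. \<exists>a b c. y = R a (b * c)}"

lemma span_all: "x \<in> CV.span GG"
proof (rule ccontr)
  assume "x \<notin> CV.span GG"
  then obtain \<omega> where om: "cfun \<omega>" "\<forall>y\<in>CV.span GG. \<omega> y = 0" "\<omega> x = 1"
    using sep_span by blast
  have van: "\<omega> (R a (b * c)) = 0" for a b c
    using om(2) CV.span_base[of "R a (b * c)" GG] by (auto simp: GG_def)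
  have st1: "ev (M a b) \<omega> g = 0" if g: "cfun g" for a b g
  proof -
    define y where "y = slice_l \<omega> (M a b)"
    have y: "ev (M a b) \<omega> G = G y" if "cfun G" for G
      using slice_l_ev[OF M_T2 om(1) that] y_def by simp
    have "\<phi> (y * c) = 0" for c
    proof -
      have "\<phi> (y * c) = ev (M a b) \<omega> (rs \<phi> c)" using y[OF cfun_rs[OF cfun_phi]] by simp
      also have "\<dots> = ev (M a (b * c)) \<omega> \<phi>" by (rule A1[OF om(1) cfun_phi])
      also have "\<dots> = \<omega> (R a (b * c))" unfolding R_def by (rule slice_r_ev[OF M_T2 cfun_phi om(1)])
      finally show ?thesis using van by simp
    qed
    then have "y = 0" by (rule faith)
    then show ?thesis using y[OF g] cfun_zero[OF g] by simp
  qed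
  have st2: "\<epsilon> b * \<omega> a = 0" for a b
  proof -
    define z where "z = slice_r \<epsilon> (M a b)"
    have z: "ev (M a b) F \<epsilon> = F z" if "cfun F" for F
      using slice_r_ev[OF M_T2 cfun_eps that] z_def by simp
    have rse: "rs \<epsilon> b = (\<lambda>x. \<epsilon> b * \<epsilon> x)" by (rule ext) (simp add: eps_mult mult.commute)
    have zd: "z * d = cscale (\<epsilon> b) a * d" for d
    proof (rule sep_eq)
      fix f :: "'a \<Rightarrow> complex" assume f: "cfun f"
      have "f (z * d) = ev (M a b) (rs f d) \<epsilon>" using z[OF cfun_rs[OF f]] by simp
      also have "\<dots> = ev (P a d) f (rs \<epsilon> b)" by (rule A3[OF f cfun_eps])
      also have "\<dots> = ev (P a d) f (\<lambda>x. \<epsilon> b * \<epsilon> x)" by (simp only: rse)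
      also have "\<dots> = \<epsilon> b * ev (P a d) f \<epsilon>" by (rule rep2_hom2[OF rep2_P f cfun_eps])
      also have "\<dots> = \<epsilon> b * f (a * d)" by (simp only: EPS3[OF f])
      also have "\<dots> = f (cscale (\<epsilon> b) a * d)" by (simp only: cs_mult_left cfun_scale[OF f])
      finally show "f (z * d) = f (cscale (\<epsilon> b) a * d)" .
    qed
    have "(z - cscale (\<epsilon> b) a) * d = 0" for d using zd[of d] by (simp add: left_diff_distrib)
    then have "z - cscale (\<epsilon> b) a = 0" by (rule nd_r[OF nd])
    then have "z = cscale (\<epsilon> b) a" by simp
    then show ?thesis using st1[OF cfun_eps, of a b] z[OF om(1)] cfun_scale[OF om(1)] by simp
  qed
  obtain b where "\<epsilon> b \<noteq> 0" using eps_nz by blast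
  then have "\<omega> x = 0" using st2[of b x] by simp
  then show False using om(3) by simp
qed

lemma S_zero: "S 0 = 0"
  using clin_scale[OF S_clin, of 0 0] by simp

lemma P1_all: "\<epsilon> (S x) = \<epsilon> x"
  using span_all[of x]
proof (induction rule: CV.span_induct_alt)
  case base then show ?case by (simp add: S_zero cfun_zero[OF cfun_eps])
next
  case (step c g y)
  then obtain a b c' where gd: "g = R a (b * c')" by (auto simp: GG_def)
  have "\<epsilon> (S g) = \<epsilon> g"
  proof -
    have "\<epsilon> (S g) = ev (N a (b * c')) \<epsilon> \<phi>"
      unfolding gd R_def ANT by (rule slice_r_ev[OF N_T2 cfun_phi cfun_eps, symmetric])
    also have "\<dots> = \<phi> (a * (b * c'))" by (rule EPS2[OF cfun_phi])
    also have "\<dots> = ev (M a (b * c')) \<epsilon> \<phi>" by (rule EPS1[OF cfun_phi, symmetric])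
    also have "\<dots> = \<epsilon> g" unfolding gd R_def by (rule slice_r_ev[OF M_T2 cfun_phi cfun_eps])
    finally show ?thesis .
  qed
  then show ?case using step(2)
    by (simp add: clin_add[OF S_clin] clin_scale[OF S_clin] cfun_add[OF cfun_eps] cfun_scale[OF cfun_eps])
qed

lemma zero_cs: "(0::'a) = cscale 0 0" by simp

lemma P2_all: "mult_eq T2 (\<Delta> (S x)) (flipSS_M S (\<Delta> x))"
  using span_all[of x]
proof (induction rule: CV.span_induct_alt)
  case base
  have d0: "fst (\<Delta> 0) w = (\<lambda>\<beta>. 0)" "snd (\<Delta> 0) w = (\<lambda>\<beta>. 0)" if "w \<in> T2" for w
    using D_scale[OF that, of 0 0] by (simp_all add: scalet_def)
  show ?case unfolding mult_eq_def flipSS_M_def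
    by (simp add: S_zero d0 flipSS_T2[OF _ Sinv_clin] flipSS_zero)
next
  case (step c g y)
  then obtain a b c' where gd: "g = R a (b * c')" by (auto simp: GG_def)
  have Sg: "S g = L a (b * c')" by (simp add: gd R_def L_def ANT)
  have hg: "mult_eq T2 (\<Delta> (S g)) (flipSS_M S (\<Delta> g))" unfolding Sg unfolding gd by (rule elem_ok)
  have hy: "mult_eq T2 (\<Delta> (S y)) (flipSS_M S (\<Delta> y))" by (rule step(2))
  have Ssum: "S (cscale c g + y) = cscale c (S g) + S y" by (simp add: clin_add[OF S_clin] clin_scale[OF S_clin])
  show ?case unfolding mult_eq_def flipSS_M_def fst_conv snd_conv
  proof (intro conjI ballI)
    fix w :: "'a t2" assume w: "w \<in> T2"
    have w': "flipSS (inv S) w \<in> T2" by (rule flipSS_T2[OF w Sinv_clin])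
    have e1: "fst (\<Delta> (S g)) w = flipSS S (snd (\<Delta> g) (flipSS (inv S) w))"
      using hg w unfolding mult_eq_def flipSS_M_def by simp
    have e2: "fst (\<Delta> (S y)) w = flipSS S (snd (\<Delta> y) (flipSS (inv S) w))"
      using hy w unfolding mult_eq_def flipSS_M_def by simp
    show "fst (\<Delta> (S (cscale c g + y))) w = flipSS S (snd (\<Delta> (cscale c g + y)) (flipSS (inv S) w))"
      by (simp add: Ssum D_add[OF w] D_scale[OF w] D_add[OF w'] D_scale[OF w'] e1 e2 flipSS_addt flipSS_scalet)
  next
    fix w :: "'a t2" assume w: "w \<in> T2"
    have w': "flipSS (inv S) w \<in> T2" by (rule flipSS_T2[OF w Sinv_clin])
    have e1: "snd (\<Delta> (S g)) w = flipSS S (fst (\<Delta> g) (flipSS (inv S) w))"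
      using hg w unfolding mult_eq_def flipSS_M_def by simp
    have e2: "snd (\<Delta> (S y)) w = flipSS S (fst (\<Delta> y) (flipSS (inv S) w))"
      using hy w unfolding mult_eq_def flipSS_M_def by simp
    show "snd (\<Delta> (S (cscale c g + y))) w = flipSS S (fst (\<Delta> (cscale c g + y)) (flipSS (inv S) w))"
      by (simp add: Ssum D_add[OF w] D_scale[OF w] D_add[OF w'] D_scale[OF w'] e1 e2 flipSS_addt flipSS_scalet)
  qed
qed

end

theorem proposition2p1:
  fixes \<Delta> :: "'a::calg \<Rightarrow> 'a m2" and \<epsilon> :: "'a \<Rightarrow> complex" and S :: "'a \<Rightarrow> 'a"
  assumes "alg_quantum_hypergroup \<Delta> \<epsilon> S"
  shows "\<forall>x. \<epsilon> (S x) = \<epsilon> x \<and> mult_eq T2 (\<Delta> (S x)) (flipSS_M S (\<Delta> x))"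
proof -
  from assms obtain \<phi> where "nondegenerate TYPE('a)" "regular_comult \<Delta>" "counit \<Delta> \<epsilon>"
    "left_integral \<Delta> \<phi>" "faithful \<phi>" "antipode \<Delta> \<phi> S"
    unfolding alg_quantum_hypergroup_def by blast
  then interpret aqh \<Delta> \<epsilon> S \<phi> by unfold_locales
  show ?thesis using P1_all P2_all by blast
qed


end
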